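(* Let $\pi:H(\underline\kappa)\to\mathrm{End}_{\mathbb{C}}(V)$ be a representation and $\upsilon_0,\upsilon_n\in\mathbb{C}^*$. There exist unique elements $C_w^V\in\mathbb{C}(T)\otimes\mathrm{End}_{\mathbb{C}}(V)$ ($w\in W$) such that $C_e^V(\mathbf t)=\mathrm{Id}_V$, $C_{ww'}^V(\mathbf t)=C_w^V(\mathbf t)C_{w'}^V(w^{-1}\mathbf t)$ for all $w,w'\in W$, and $$C_{s_0}^V(\mathbf t)=K_0^V(q^{1/2}/t_1),\quad C_{s_i}^V(\mathbf t)=R_i^V(t_i/t_{i+1})\ (1\le i<n),\quad C_{s_n}^V(\mathbf t)=K_n^V(t_n).$$
   Context: $H(\underline\kappa)$ ($n\ge2$, $\underline\kappa=(\kappa_0,\kappa,\ldots,\kappa,\kappa_n)$): unital algebra with generators $T_0,\ldots,T_n$, braid relations $T_0T_1T_0T_1=T_1T_0T_1T_0$, $T_{n-1}T_nT_{n-1}T_n=T_nT_{n-1}T_nT_{n-1}$, $T_iT_{i+1}T_i=T_{i+1}T_iT_{i+1}$ ($1\le i<n-1$), $T_iT_j=T_jT_i$ ($|i-j|>1$), and $(T_j-\kappa_j)(T_j+\kappa_j^{-1})=0$. The affine Weyl group $W$ is the Coxeter group with generators $s_0,\ldots,s_n$ satisfying the same braid relations and $s_j^2=e$. Fix $q\in\mathbb{C}^*$ and a square root $q^{1/2}$. $W$ acts on $T=(\mathbb{C}^* )^n$ by $s_0\mathbf t=(qt_1^{-1},t_2,\ldots,t_n)$, $s_i\mathbf t$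 = swap of $t_i,t_{i+1}$ ($1\le i<n$), $s_n\mathbf t=(t_1,\ldots,t_{n-1},t_n^{-1})$. $K_0^V,R_i^V,K_n^V$ are $K_0^V(x)=\frac{\pi(T_0^{-1})+(\upsilon_0^{-1}-\upsilon_0)x-x^2\pi(T_0)}{\kappa_0^{-1}(1-\kappa_0\upsilon_0x)(1+\kappa_0\upsilon_0^{-1}x)}$, $R_i^V(x)=\frac{\pi(T_i^{-1})-x\pi(T_i)}{\kappa^{-1}(1-\kappa^2x)}$, $K_n^V(x)=\frac{\pi(T_n^{-1})+(\upsilon_n^{-1}-\upsilon_n)x-x^2\pi(T_n)}{\kappa_n^{-1}(1-\kappa_n\upsilon_nx)(1+\kappa_n\upsilon_n^{-1}x)}$. *)

theory Defs
  imports Complex_Main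
begin

definition torus :: "nat \<Rightarrow> (nat \<Rightarrow> complex) \<Rightarrow> bool" where
  "torus n t \<longleftrightarrow> (\<forall>i\<in>{1..n}. t i \<noteq> 0)"

definition is_mpoly :: "nat \<Rightarrow> ((nat \<Rightarrow> nat) \<Rightarrow> complex) \<Rightarrow> bool" where
  "is_mpoly n c \<longleftrightarrow> finite {a. c a \<noteq> 0} \<and> (\<forall>a. c a \<noteq> 0 \<longrightarrow> (\<forall>i. i \<notin> {1..n} \<longrightarrow> a i = 0))"

definition nonzero_mpoly :: "nat \<Rightarrow> ((nat \<Rightarrow> nat) \<Rightarrow> complex) \<Rightarrow> bool" where
  "nonzero_mpoly n c \<longleftrightarrow> is_mpoly n c \<and> (\<exists>a. c a \<noteq> 0)"

definition mpoly_eval :: "nat \<Rightarrow> ((nat \<Rightarrow> nat) \<Rightarrow> complex) \<Rightarrow> (nat \<Rightarrow> complex) \<Rightarrow> complex" where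
  "mpoly_eval n c t = (\<Sum>a\<in>{a. c a \<noteq> 0}. c a * (\<Prod>i\<in>{1..n}. t i ^ a i))"

section \<open>Elements of C(T) \<otimes> End_C(V), viewed as End(V)-valued functions on T,
  and their equality (agreement on a Zariski-dense open subset of T)\<close>

definition rat_end :: "(complex \<Rightarrow> 'v::ab_group_add \<Rightarrow> 'v) \<Rightarrow> nat \<Rightarrow> ((nat \<Rightarrow> complex) \<Rightarrow> 'v \<Rightarrow> 'v) \<Rightarrow> bool" where
  "rat_end sc n F \<longleftrightarrow>
     (\<exists>d (m::nat) p A. nonzero_mpoly n d \<and>
        (\<forall>k<m. is_mpoly n (p k) \<and> Vector_Spaces.linear sc sc (A k)) \<and>
        (\<forall>t. torus n t \<and> mpoly_eval n d t \<noteq> 0 \<longrightarrow>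
             F t = (\<lambda>v. \<Sum>k<m. sc (mpoly_eval n (p k) t / mpoly_eval n d t) (A k v))))"

definition generic_eq :: "nat \<Rightarrow> ((nat \<Rightarrow> complex) \<Rightarrow> 'b) \<Rightarrow> ((nat \<Rightarrow> complex) \<Rightarrow> 'b) \<Rightarrow> bool" where
  "generic_eq n F G \<longleftrightarrow>
     (\<exists>d. nonzero_mpoly n d \<and> (\<forall>t. torus n t \<and> mpoly_eval n d t \<noteq> 0 \<longrightarrow> F t = G t))"

section \<open>The affine Weyl group W: words in s_0..s_n modulo the Coxeter relations\<close>

definition valid_word :: "nat \<Rightarrow> nat list \<Rightarrow> bool" where
  "valid_word n w \<longleftrightarrow> set w \<subseteq> {..n}"

inductive cox_eq :: "nat \<Rightarrow> nat list \<Rightarrow> nat list \<Rightarrow> bool" for n where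
  refl: "cox_eq n w w"
| sym: "cox_eq n u w \<Longrightarrow> cox_eq n w u"
| trans: "cox_eq n u v \<Longrightarrow> cox_eq n v w \<Longrightarrow> cox_eq n u w"
| ctx: "cox_eq n x y \<Longrightarrow> cox_eq n (u @ x @ v) (u @ y @ v)"
| sq: "j \<le> n \<Longrightarrow> cox_eq n [j, j] []"
| braid0: "cox_eq n [0, 1, 0, 1] [1, 0, 1, 0]"
| braidn: "cox_eq n [n - 1, n, n - 1, n] [n, n - 1, n, n - 1]"
| braidi: "1 \<le> i \<Longrightarrow> i + 1 < n \<Longrightarrow> cox_eq n [i, i + 1, i] [i + 1, i, i + 1]"
| comm: "j \<le> n \<Longrightarrow> i + 1 < j \<Longrightarrow> cox_eq n [i, j] [j, i]"

text \<open>Action of the generators and of words on T (the word [j1,...,jk] is s_j1 ... s_jk).\<close>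

definition sact :: "nat \<Rightarrow> complex \<Rightarrow> nat \<Rightarrow> (nat \<Rightarrow> complex) \<Rightarrow> (nat \<Rightarrow> complex)" where
  "sact n q j t =
     (if j = 0 then t(1 := q / t 1)
      else if j < n then t(j := t (Suc j), Suc j := t j)
      else if j = n then t(n := inverse (t n))
      else t)"

definition wact :: "nat \<Rightarrow> complex \<Rightarrow> nat list \<Rightarrow> (nat \<Rightarrow> complex) \<Rightarrow> (nat \<Rightarrow> complex)" where
  "wact n q w t = foldr (sact n q) w t"

definition kap :: "nat \<Rightarrow> complex \<Rightarrow> complex \<Rightarrow> complex \<Rightarrow> nat \<Rightarrow> complex" where
  "kap n k0 k kn j = (if j = 0 then k0 else if j = n then kn else k)"

text \<open>pi(T_j) = P j; the tuple (P 0, ..., P n) of linear endomorphisms satisfying the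
  defining relations of H is the same as an algebra representation of H.\<close>

definition is_rep :: "(complex \<Rightarrow> 'v::ab_group_add \<Rightarrow> 'v) \<Rightarrow> nat \<Rightarrow> complex \<Rightarrow> complex \<Rightarrow> complex
    \<Rightarrow> (nat \<Rightarrow> 'v \<Rightarrow> 'v) \<Rightarrow> bool" where
  "is_rep sc n k0 k kn P \<longleftrightarrow>
     (\<forall>j\<le>n. Vector_Spaces.linear sc sc (P j)) \<and>
     P 0 \<circ> P 1 \<circ> P 0 \<circ> P 1 = P 1 \<circ> P 0 \<circ> P 1 \<circ> P 0 \<and>
     P (n - 1) \<circ> P n \<circ> P (n - 1) \<circ> P n = P n \<circ> P (n - 1) \<circ> P n \<circ> P (n - 1) \<and>
     (\<forall>i. 1 \<le> i \<and> i + 1 < n \<longrightarrow> P i \<circ> P (i + 1) \<circ> P i = P (i + 1) \<circ> P i \<circ> P (i + 1)) \<and>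
     (\<forall>i j. j \<le> n \<and> i + 1 < j \<longrightarrow> P i \<circ> P j = P j \<circ> P i) \<and>
     (\<forall>j\<le>n. (\<lambda>v. P j v - sc (kap n k0 k kn j) v) \<circ> (\<lambda>v. P j v + sc (inverse (kap n k0 k kn j)) v)
              = (\<lambda>v. 0))"

text \<open>pi(T_j^{-1}); in H one has T_j^{-1} = T_j - (kappa_j - kappa_j^{-1}).\<close>

definition Pinv :: "(complex \<Rightarrow> 'v::ab_group_add \<Rightarrow> 'v) \<Rightarrow> nat \<Rightarrow> complex \<Rightarrow> complex \<Rightarrow> complex
    \<Rightarrow> (nat \<Rightarrow> 'v \<Rightarrow> 'v) \<Rightarrow> nat \<Rightarrow> 'v \<Rightarrow> 'v" where
  "Pinv sc n k0 k kn P j = (\<lambda>v. P j v - sc (kap n k0 k kn j - inverse (kap n k0 k kn j)) v)"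

definition K0V where
  "K0V sc n k0 k kn P u0 x =
     (\<lambda>v. sc (inverse (inverse k0 * (1 - k0 * u0 * x) * (1 + k0 * inverse u0 * x)))
        (Pinv sc n k0 k kn P 0 v + sc ((inverse u0 - u0) * x) v - sc (x ^ 2) (P 0 v)))"

definition KnV where
  "KnV sc n k0 k kn P un x =
     (\<lambda>v. sc (inverse (inverse kn * (1 - kn * un * x) * (1 + kn * inverse un * x)))
        (Pinv sc n k0 k kn P n v + sc ((inverse un - un) * x) v - sc (x ^ 2) (P n v)))"

definition RV where
  "RV sc n k0 k kn P i x =
     (\<lambda>v. sc (inverse (inverse k * (1 - k ^ 2 * x))) (Pinv sc n k0 k kn P i v - sc x (P i v)))"

definition is_C_family where
  "is_C_family sc n k0 k kn P q qh u0 un C \<longleftrightarrow>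
     (\<forall>w. valid_word n w \<longrightarrow> rat_end sc n (C w)) \<and>
     (\<forall>w w'. valid_word n w \<and> valid_word n w' \<and> cox_eq n w w' \<longrightarrow> generic_eq n (C w) (C w')) \<and>
     generic_eq n (C []) (\<lambda>t. id) \<and>
     (\<forall>w w'. valid_word n w \<and> valid_word n w' \<longrightarrow>
        generic_eq n (C (w @ w')) (\<lambda>t. C w t \<circ> C w' (wact n q (rev w) t))) \<and>
     generic_eq n (C [0]) (\<lambda>t. K0V sc n k0 k kn P u0 (qh / t 1)) \<and>
     (\<forall>i. 1 \<le> i \<and> i < n \<longrightarrow> generic_eq n (C [i]) (\<lambda>t. RV sc n k0 k kn P i (t i / t (Suc i)))) \<and>
     generic_eq n (C [n]) (\<lambda>t. KnV sc n k0 k kn P un (t n))"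

end

theory Submission
  imports Defs "HOL-Computational_Algebra.Polynomial"
begin

definition mon :: "nat \<Rightarrow> (nat \<Rightarrow> nat) \<Rightarrow> (nat \<Rightarrow> complex) \<Rightarrow> complex" where
  "mon n a t = (\<Prod>i\<in>{1..n}. t i ^ a i)"

lemma eval_superset:
  assumes "finite S" "{a. p a \<noteq> 0} \<subseteq> S"
  shows "mpoly_eval n p t = (\<Sum>a\<in>S. p a * mon n a t)"
  unfolding mpoly_eval_def mon_def
  by (rule sum.mono_neutral_left) (use assms in auto)

definition polyfun :: "nat \<Rightarrow> ((nat \<Rightarrow> complex) \<Rightarrow> complex) \<Rightarrow> bool" where
  "polyfun n f \<longleftrightarrow> (\<exists>p. is_mpoly n p \<and> (\<forall>t. torus n t \<longrightarrow> mpoly_eval n p t = f t))"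

lemma polyfun_cong: "polyfun n f \<Longrightarrow> (\<And>t. torus n t \<Longrightarrow> f t = g t) \<Longrightarrow> polyfun n g"
  unfolding polyfun_def by metis

lemma polyfun_const: "polyfun n (\<lambda>t. c)"
proof -
  define p where "p = (\<lambda>a::nat\<Rightarrow>nat. if a = (\<lambda>_. 0) then c else 0)"
  have S: "{a. p a \<noteq> 0} \<subseteq> {\<lambda>_. 0}" by (auto simp: p_def split: if_splits)
  have "is_mpoly n p" unfolding is_mpoly_def using S by (auto intro: finite_subset simp: p_def split: if_splits)
  moreover have "mpoly_eval n p t = c" for t
    by (subst eval_superset[OF _ S]) (auto simp: p_def mon_def)
  ultimately show ?thesis unfolding polyfun_def by blast
qed

lemma polyfun_var: assumes "i \<in> {1..n}" shows "polyfun n (\<lambda>t. t i)"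
proof -
  define e where "e = (\<lambda>j. if j = i then 1 else (0::nat))"
  define p where "p = (\<lambda>a::nat\<Rightarrow>nat. if a = e then (1::complex) else 0)"
  have S: "{a. p a \<noteq> 0} \<subseteq> {e}" by (auto simp: p_def split: if_splits)
  have "is_mpoly n p" unfolding is_mpoly_def using S assms
    by (auto intro: finite_subset simp: p_def e_def split: if_splits)
  moreover have "mpoly_eval n p t = t i" for t
  proof -
    have "mpoly_eval n p t = (\<Prod>j\<in>{1..n}. t j ^ e j)"
      by (subst eval_superset[OF _ S]) (auto simp: p_def mon_def)
    also have "\<dots> = (\<Prod>j\<in>{1..n}. if j = i then t j else 1)"
      by (rule prod.cong) (auto simp: e_def)
    also have "\<dots> = t i" using assms by (subst prod.delta) auto
    finally show ?thesis .
  qed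
  ultimately show ?thesis unfolding polyfun_def by blast
qed

lemma polyfun_add: assumes "polyfun n f" "polyfun n g" shows "polyfun n (\<lambda>t. f t + g t)"
proof -
  obtain p where p: "is_mpoly n p" "\<And>t. torus n t \<Longrightarrow> mpoly_eval n p t = f t" using assms(1) unfolding polyfun_def by blast
  obtain q where q: "is_mpoly n q" "\<And>t. torus n t \<Longrightarrow> mpoly_eval n q t = g t" using assms(2) unfolding polyfun_def by blast
  define r where "r = (\<lambda>a. p a + q a)"
  define S where "S = {a. p a \<noteq> 0} \<union> {a. q a \<noteq> 0}"
  have fS: "finite S" using p(1) q(1) unfolding S_def is_mpoly_def by auto
  have rS: "{a. r a \<noteq> 0} \<subseteq> S" by (auto simp: r_def S_def)
  have "is_mpoly n r" unfolding is_mpoly_def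
  proof (intro conjI allI impI)
    show "finite {a. r a \<noteq> 0}" using fS rS finite_subset by blast
  next
    fix a i assume "r a \<noteq> 0" "i \<notin> {1..n}"
    then have "p a \<noteq> 0 \<or> q a \<noteq> 0" by (auto simp: r_def)
    then show "a i = 0" using p(1) q(1) \<open>i \<notin> {1..n}\<close> unfolding is_mpoly_def by blast
  qed
  moreover have "mpoly_eval n r t = f t + g t" if "torus n t" for t
  proof -
    have "mpoly_eval n r t = (\<Sum>a\<in>S. p a * mon n a t) + (\<Sum>a\<in>S. q a * mon n a t)"
      by (subst eval_superset[OF fS rS]) (simp add: r_def distrib_right sum.distrib)
    also have "\<dots> = f t + g t"
      using p(2)[OF that] q(2)[OF that] eval_superset[OF fS, of p n t] eval_superset[OF fS, of q n t]
      by (auto simp: S_def)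
    finally show ?thesis .
  qed
  ultimately show ?thesis unfolding polyfun_def by blast
qed

lemma mon_add: "mon n (\<lambda>i. b i + c i) t = mon n b t * mon n c t"
  unfolding mon_def by (simp add: power_add prod.distrib)

lemma polyfun_mult: assumes "polyfun n f" "polyfun n g" shows "polyfun n (\<lambda>t. f t * g t)"
proof -
  obtain p where p: "is_mpoly n p" "\<And>t. torus n t \<Longrightarrow> mpoly_eval n p t = f t" using assms(1) unfolding polyfun_def by blast
  obtain q where q: "is_mpoly n q" "\<And>t. torus n t \<Longrightarrow> mpoly_eval n q t = g t" using assms(2) unfolding polyfun_def by blast
  define S1 where "S1 = {a. p a \<noteq> 0}"
  define S2 where "S2 = {a. q a \<noteq> 0}"
  have f1: "finite S1" and f2: "finite S2" using p(1) q(1) unfolding S1_def S2_def is_mpoly_def by auto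
  define ad where "ad = (\<lambda>bc::(nat\<Rightarrow>nat)\<times>(nat\<Rightarrow>nat). (\<lambda>i. fst bc i + snd bc i))"
  define r where "r = (\<lambda>a. \<Sum>bc\<in>{bc. bc \<in> S1 \<times> S2 \<and> ad bc = a}. p (fst bc) * q (snd bc))"
  define T where "T = ad ` (S1 \<times> S2)"
  have fT: "finite T" using f1 f2 unfolding T_def by auto
  have rT: "{a. r a \<noteq> 0} \<subseteq> T"
  proof
    fix a assume a: "a \<in> {a. r a \<noteq> 0}"
    have "{bc. bc \<in> S1 \<times> S2 \<and> ad bc = a} \<noteq> {}"
    proof
      assume "{bc. bc \<in> S1 \<times> S2 \<and> ad bc = a} = {}"
      then have "r a = 0" unfolding r_def by (simp only:) simp
      with a show False by simp
    qed
    then show "a \<in> T" unfolding T_def by auto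
  qed
  have "is_mpoly n r" unfolding is_mpoly_def
  proof (intro conjI allI impI)
    show "finite {a. r a \<noteq> 0}" using rT fT finite_subset by blast
  next
    fix a i assume "r a \<noteq> 0" "i \<notin> {1..n}"
    then have "a \<in> T" using rT by auto
    then obtain b c where "b \<in> S1" "c \<in> S2" "a = ad (b, c)" unfolding T_def by auto
    then show "a i = 0" using p(1) q(1) \<open>i \<notin> {1..n}\<close> unfolding is_mpoly_def S1_def S2_def ad_def by auto
  qed
  moreover have "mpoly_eval n r t = f t * g t" if "torus n t" for t
  proof -
    have "mpoly_eval n r t = (\<Sum>a\<in>T. r a * mon n a t)" by (rule eval_superset[OF fT rT])
    also have "\<dots> = (\<Sum>a\<in>T. \<Sum>bc\<in>{bc. bc \<in> S1 \<times> S2 \<and> ad bc = a}. p (fst bc) * q (snd bc) * mon n (ad bc) t)"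
      unfolding r_def sum_distrib_right by (rule sum.cong) auto
    also have "\<dots> = (\<Sum>bc\<in>S1 \<times> S2. p (fst bc) * q (snd bc) * mon n (ad bc) t)"
      by (rule sum.group) (use f1 f2 fT in \<open>auto simp: T_def\<close>)
    also have "\<dots> = (\<Sum>bc\<in>S1 \<times> S2. (p (fst bc) * mon n (fst bc) t) * (q (snd bc) * mon n (snd bc) t))"
      by (rule sum.cong) (auto simp: ad_def mon_add)
    also have "\<dots> = (\<Sum>b\<in>S1. p b * mon n b t) * (\<Sum>c\<in>S2. q c * mon n c t)"
      by (simp add: sum_product sum.cartesian_product case_prod_beta)
    also have "\<dots> = f t * g t"
      using p(2)[OF that] q(2)[OF that] eval_superset[OF f1, of p n t] eval_superset[OF f2, of q n t]
      by (auto simp: S1_def S2_def)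
    finally show ?thesis .
  qed
  ultimately show ?thesis unfolding polyfun_def by blast
qed

lemma polyfun_sum: "finite A \<Longrightarrow> (\<And>x. x \<in> A \<Longrightarrow> polyfun n (f x)) \<Longrightarrow> polyfun n (\<lambda>t. \<Sum>x\<in>A. f x t)"
proof (induction A rule: finite_induct)
  case empty then show ?case using polyfun_const[of n 0] by simp
next
  case (insert x F) then show ?case by (simp add: polyfun_add)
qed

lemma polyfun_prod: "finite A \<Longrightarrow> (\<And>x. x \<in> A \<Longrightarrow> polyfun n (f x)) \<Longrightarrow> polyfun n (\<lambda>t. \<Prod>x\<in>A. f x t)"
proof (induction A rule: finite_induct)
  case empty then show ?case using polyfun_const[of n 1] by simp
next
  case (insert x F) then show ?case by (simp add: polyfun_mult)
qed

lemma polyfun_power: "polyfun n f \<Longrightarrow> polyfun n (\<lambda>t. f t ^ m)"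
proof (induction m)
  case 0 then show ?case using polyfun_const[of n 1] by simp
next
  case (Suc m) then show ?case using polyfun_mult[of n f "\<lambda>t. f t ^ m"] by simp
qed

lemma polyfun_minus: "polyfun n f \<Longrightarrow> polyfun n g \<Longrightarrow> polyfun n (\<lambda>t. f t - g t)"
proof -
  assume a: "polyfun n f" "polyfun n g"
  have "polyfun n (\<lambda>t. f t + (-1) * g t)" using polyfun_add[OF a(1) polyfun_mult[OF polyfun_const a(2)]] .
  then show ?thesis by (rule polyfun_cong) simp
qed

lemma polyfun_eval: "is_mpoly n p \<Longrightarrow> polyfun n (mpoly_eval n p)"
  unfolding polyfun_def by blast

lemma nonzero_if_eval: "is_mpoly n p \<Longrightarrow> mpoly_eval n p t \<noteq> 0 \<Longrightarrow> nonzero_mpoly n p"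
  unfolding nonzero_mpoly_def mpoly_eval_def by (metis (mono_tags, lifting) empty_Collect_eq sum.empty)

lemma enc_bound: "(\<forall>i<m. a i < (B::nat)) \<Longrightarrow> (\<Sum>i<m. a i * B^i) < B^m"
proof (induction m)
  case 0 then show ?case by simp
next
  case (Suc m)
  then have "(\<Sum>i<m. a i * B^i) < B^m" "a m < B" by auto
  then have "(\<Sum>i<m. a i * B^i) + a m * B^m < B^m + a m * B^m" by simp
  also have "\<dots> = (Suc (a m)) * B^m" by simp
  also have "\<dots> \<le> B * B^m" using \<open>a m < B\<close> by (intro mult_right_mono) auto
  finally show ?case by simp
qed

lemma enc_inj: "(\<forall>i<m. a i < (B::nat)) \<Longrightarrow> (\<forall>i<m. b i < B) \<Longrightarrow>
   (\<Sum>i<m. a i * B^i) = (\<Sum>i<m. b i * B^i) \<Longrightarrow> \<forall>i<m. a i = b i"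
proof (induction m)
  case 0 then show ?case by simp
next
  case (Suc m)
  have ba: "(\<Sum>i<m. a i * B^i) < B^m" and bb: "(\<Sum>i<m. b i * B^i) < B^m"
    using Suc.prems by (auto intro!: enc_bound)
  have e: "(\<Sum>i<m. a i * B^i) + a m * B^m = (\<Sum>i<m. b i * B^i) + b m * B^m"
    using Suc.prems(3) by simp
  have "((\<Sum>i<m. a i * B^i) + a m * B^m) mod B^m = (\<Sum>i<m. a i * B^i)" using ba by simp
  moreover have "((\<Sum>i<m. b i * B^i) + b m * B^m) mod B^m = (\<Sum>i<m. b i * B^i)" using bb by simp
  ultimately have e1: "(\<Sum>i<m. a i * B^i) = (\<Sum>i<m. b i * B^i)" using e by metis
  have pos: "B^m > 0" using Suc.prems(1) by (metis gr_implies_not0 lessI zero_less_power gr0I)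
  have "((\<Sum>i<m. a i * B^i) + a m * B^m) div B^m = a m" using ba pos by simp
  moreover have "((\<Sum>i<m. b i * B^i) + b m * B^m) div B^m = b m" using bb pos by simp
  ultimately have "a m = b m" using e by metis
  moreover have "\<forall>i<m. a i = b i" using Suc e1 by auto
  ultimately show ?case using less_Suc_eq by auto
qed

definition mdeg :: "nat \<Rightarrow> ((nat \<Rightarrow> nat) \<Rightarrow> complex) \<Rightarrow> nat" where
  "mdeg n p = Max ((\<lambda>(a, i). a i) ` ({a. p a \<noteq> 0} \<times> {1..n}) \<union> {0})"

lemma mdeg_ge: "is_mpoly n p \<Longrightarrow> p a \<noteq> 0 \<Longrightarrow> i \<in> {1..n} \<Longrightarrow> a i \<le> mdeg n p"
  unfolding mdeg_def is_mpoly_def by (rule Max_ge) force+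

definition kr :: "nat \<Rightarrow> complex \<Rightarrow> nat \<Rightarrow> complex" where
  "kr B z = (\<lambda>i. z ^ (B ^ (i - 1)))"

lemma kr_torus: "z \<noteq> 0 \<Longrightarrow> torus n (kr B z)"
  unfolding torus_def kr_def by auto

lemma kron_finite:
  assumes p: "nonzero_mpoly n p" and B: "mdeg n p < B"
  shows "finite {z. mpoly_eval n p (kr B z) = 0}"
proof -
  define S where "S = {a. p a \<noteq> 0}"
  have pm: "is_mpoly n p" using p unfolding nonzero_mpoly_def by simp
  have fS: "finite S" using pm unfolding S_def is_mpoly_def by simp
  define enc where "enc = (\<lambda>a::nat\<Rightarrow>nat. \<Sum>i<n. a (Suc i) * B^i)"
  define P where "P = (\<Sum>a\<in>S. monom (p a) (enc a))"
  have mk: "mon n a (kr B z) = z ^ enc a" for a z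
  proof -
    have "mon n a (kr B z) = (\<Prod>i\<in>{1..n}. z ^ (B ^ (i - 1) * a i))"
      unfolding mon_def kr_def by (simp add: power_mult)
    also have "\<dots> = z ^ (\<Sum>i\<in>{1..n}. B ^ (i - 1) * a i)" by (simp add: power_sum)
    also have "(\<Sum>i\<in>{1..n}. B ^ (i - 1) * a i) = enc a"
      unfolding enc_def by (simp add: sum.atLeast1_atMost_eq mult.commute)
    finally show ?thesis .
  qed
  have ev: "mpoly_eval n p (kr B z) = poly P z" for z
    unfolding P_def poly_sum poly_monom
    by (subst eval_superset[OF fS]) (auto simp: S_def mk)
  have inj: "a = b" if "a \<in> S" "b \<in> S" "enc a = enc b" for a b
  proof -
    have "\<forall>i<n. a (Suc i) = b (Suc i)"
    proof (rule enc_inj)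
      show "\<forall>i<n. a (Suc i) < B"
      proof (intro allI impI)
        fix i assume "i < n"
        then have "a (Suc i) \<le> mdeg n p" using mdeg_ge[OF pm, of a "Suc i"] that(1) by (simp add: S_def)
        then show "a (Suc i) < B" using B by simp
      qed
      show "\<forall>i<n. b (Suc i) < B"
      proof (intro allI impI)
        fix i assume "i < n"
        then have "b (Suc i) \<le> mdeg n p" using mdeg_ge[OF pm, of b "Suc i"] that(2) by (simp add: S_def)
        then show "b (Suc i) < B" using B by simp
      qed
      show "(\<Sum>i<n. a (Suc i) * B ^ i) = (\<Sum>i<n. b (Suc i) * B ^ i)" using that(3) by (simp add: enc_def)
    qed
    then have "a i = b i" for i
    proof (cases "i \<in> {1..n}")
      case True
      then obtain j where "i = Suc j" "j < n" by (cases i) auto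
      then show ?thesis using \<open>\<forall>i<n. a (Suc i) = b (Suc i)\<close> by simp
    next
      case False
      have "a i = 0" "b i = 0" using pm that False unfolding is_mpoly_def S_def by blast+
      then show ?thesis by simp
    qed
    then show ?thesis by auto
  qed
  obtain a0 where a0: "p a0 \<noteq> 0" using p unfolding nonzero_mpoly_def by auto
  have a0S: "a0 \<in> S" using a0 by (simp add: S_def)
  have "coeff P (enc a0) = (\<Sum>a\<in>S. if a = a0 then p a else 0)"
    unfolding P_def coeff_sum coeff_monom
  proof (rule sum.cong)
    fix a assume "a \<in> S"
    then have "(enc a = enc a0) = (a = a0)" using inj[OF _ a0S] by blast
    then show "(if enc a = enc a0 then p a else 0) = (if a = a0 then p a else 0)" by simp
  qed simp
  also have "\<dots> = p a0" using fS a0S by (simp add: sum.delta)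
  finally have "P \<noteq> 0" using a0 by auto
  then have "finite {z. poly P z = 0}" by (rule poly_roots_finite)
  then show ?thesis using ev by simp
qed

lemma two_nonzero:
  assumes "nonzero_mpoly n p" "nonzero_mpoly n q"
  shows "\<exists>t. torus n t \<and> mpoly_eval n p t \<noteq> 0 \<and> mpoly_eval n q t \<noteq> 0"
proof -
  define B where "B = Suc (max (mdeg n p) (mdeg n q))"
  define Z where "Z = {z. mpoly_eval n p (kr B z) = 0} \<union> {z. mpoly_eval n q (kr B z) = 0} \<union> {0}"
  have B1: "mdeg n p < B" "mdeg n q < B" by (auto simp: B_def)
  have "finite Z" unfolding Z_def using kron_finite[OF assms(1) B1(1)] kron_finite[OF assms(2) B1(2)] by simp
  then obtain z where "z \<notin> Z" using ex_new_if_finite[OF infinite_UNIV_char_0[where 'a=complex]] by blast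
  then have "z \<notin> {z. mpoly_eval n p (kr B z) = 0} \<union> {z. mpoly_eval n q (kr B z) = 0} \<union> {0}" unfolding Z_def .
  then show ?thesis using kr_torus[of z n B] by auto
qed

definition good :: "nat \<Rightarrow> ((nat \<Rightarrow> complex) \<Rightarrow> complex) \<Rightarrow> bool" where
  "good n f \<longleftrightarrow> polyfun n f \<and> (\<exists>t. torus n t \<and> f t \<noteq> 0)"

lemma good_nonzero: "good n f \<Longrightarrow> \<exists>p. nonzero_mpoly n p \<and> (\<forall>t. torus n t \<longrightarrow> mpoly_eval n p t = f t)"
proof -
  assume "good n f"
  then obtain p t where p: "is_mpoly n p" "\<forall>t. torus n t \<longrightarrow> mpoly_eval n p t = f t" "torus n t" "f t \<noteq> 0"
    unfolding good_def polyfun_def by blast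
  then have "nonzero_mpoly n p" using nonzero_if_eval[of n p t] by simp
  then show ?thesis using p by blast
qed

lemma good_mult: assumes "good n f" "good n g" shows "good n (\<lambda>t. f t * g t)"
proof -
  obtain p where p: "nonzero_mpoly n p" "\<And>t. torus n t \<Longrightarrow> mpoly_eval n p t = f t" using good_nonzero[OF assms(1)] by blast
  obtain q where q: "nonzero_mpoly n q" "\<And>t. torus n t \<Longrightarrow> mpoly_eval n q t = g t" using good_nonzero[OF assms(2)] by blast
  obtain t where "torus n t" "mpoly_eval n p t \<noteq> 0" "mpoly_eval n q t \<noteq> 0" using two_nonzero[OF p(1) q(1)] by blast
  then show ?thesis using assms p q unfolding good_def by (auto intro!: polyfun_mult)
qed

lemma good_const: "c \<noteq> 0 \<Longrightarrow> (\<exists>t. torus n t) \<Longrightarrow> good n (\<lambda>t. c)"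
  unfolding good_def using polyfun_const by auto

lemma torus_ones: "torus n (\<lambda>i. 1)" unfolding torus_def by simp

definition gen :: "nat \<Rightarrow> ((nat \<Rightarrow> complex) \<Rightarrow> 'b) \<Rightarrow> ((nat \<Rightarrow> complex) \<Rightarrow> 'b) \<Rightarrow> bool" where
  "gen n F G \<longleftrightarrow> (\<exists>f. good n f \<and> (\<forall>t. torus n t \<and> f t \<noteq> 0 \<longrightarrow> F t = G t))"

lemma gen_generic_eq: "gen n F G \<longleftrightarrow> generic_eq n F G"
proof
  assume "gen n F G"
  then obtain f where f: "good n f" "\<forall>t. torus n t \<and> f t \<noteq> 0 \<longrightarrow> F t = G t" unfolding gen_def by blast
  obtain p where "nonzero_mpoly n p" "\<forall>t. torus n t \<longrightarrow> mpoly_eval n p t = f t" using good_nonzero[OF f(1)] by blast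
  then show "generic_eq n F G" unfolding generic_eq_def using f(2) by (intro exI[of _ p]) auto
next
  assume "generic_eq n F G"
  then obtain d where d: "nonzero_mpoly n d" "\<forall>t. torus n t \<and> mpoly_eval n d t \<noteq> 0 \<longrightarrow> F t = G t"
    unfolding generic_eq_def by blast
  obtain t where "torus n t" "mpoly_eval n d t \<noteq> 0" using two_nonzero[OF d(1) d(1)] by blast
  then have "good n (mpoly_eval n d)" unfolding good_def using d(1) polyfun_eval nonzero_mpoly_def by blast
  then show "gen n F G" unfolding gen_def using d(2) by blast
qed

lemma gen_refl_exact: "(\<And>t. torus n t \<Longrightarrow> F t = G t) \<Longrightarrow> gen n F G"
  unfolding gen_def using good_const[of 1 n] torus_ones by fastforce

lemma gen_sym: "gen n F G \<Longrightarrow> gen n G F"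
  unfolding gen_def by (metis (no_types))

lemma gen_trans: assumes "gen n F G" "gen n G H" shows "gen n F H"
proof -
  obtain f where f: "good n f" "\<forall>t. torus n t \<and> f t \<noteq> 0 \<longrightarrow> F t = G t" using assms(1) unfolding gen_def by blast
  obtain g where g: "good n g" "\<forall>t. torus n t \<and> g t \<noteq> 0 \<longrightarrow> G t = H t" using assms(2) unfolding gen_def by blast
  show ?thesis unfolding gen_def using good_mult[OF f(1) g(1)] f(2) g(2) by (intro exI[of _ "\<lambda>t. f t * g t"]) auto
qed

lemma gen_comp: assumes "gen n A B" "gen n F G" shows "gen n (\<lambda>t. A t \<circ> F t) (\<lambda>t. B t \<circ> G t)"
proof -
  obtain f where f: "good n f" "\<forall>t. torus n t \<and> f t \<noteq> 0 \<longrightarrow> A t = B t" using assms(1) unfolding gen_def by blast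
  obtain g where g: "good n g" "\<forall>t. torus n t \<and> g t \<noteq> 0 \<longrightarrow> F t = G t" using assms(2) unfolding gen_def by blast
  show ?thesis unfolding gen_def using good_mult[OF f(1) g(1)] f(2) g(2) by (intro exI[of _ "\<lambda>t. f t * g t"]) auto
qed

lemma polyfun_compose:
  assumes f: "polyfun n f" and ht: "\<And>t. torus n t \<Longrightarrow> torus n (h t)"
    and hp: "\<And>i. i \<in> {1..n} \<Longrightarrow> polyfun n (\<lambda>t. h t i)"
  shows "polyfun n (\<lambda>t. f (h t))"
proof -
  obtain p where p: "is_mpoly n p" "\<And>t. torus n t \<Longrightarrow> mpoly_eval n p t = f t" using f unfolding polyfun_def by blast
  define S where "S = {a. p a \<noteq> 0}"
  have fS: "finite S" using p(1) unfolding is_mpoly_def S_def by simp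
  have "polyfun n (\<lambda>t. \<Sum>a\<in>S. p a * (\<Prod>i\<in>{1..n}. h t i ^ a i))"
    by (intro polyfun_sum fS polyfun_mult polyfun_const polyfun_prod finite_atLeastAtMost polyfun_power hp)
  then show ?thesis
  proof (rule polyfun_cong)
    fix t assume "torus n t"
    then have "f (h t) = mpoly_eval n p (h t)" using p(2) ht by simp
    also have "\<dots> = (\<Sum>a\<in>S. p a * (\<Prod>i\<in>{1..n}. h t i ^ a i))"
      by (subst eval_superset[OF fS]) (auto simp: S_def mon_def)
    finally show "(\<Sum>a\<in>S. p a * (\<Prod>i\<in>{1..n}. h t i ^ a i)) = f (h t)" by simp
  qed
qed

lemma polyfun_invert:
  assumes f: "polyfun n f" and m: "m \<in> {1..n}" and rho: "\<rho> \<noteq> 0"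
  shows "\<exists>N0. \<forall>N\<ge>N0. polyfun n (\<lambda>t. t m ^ N * f (t(m := \<rho> / t m)))"
proof -
  obtain p where p: "is_mpoly n p" "\<And>t. torus n t \<Longrightarrow> mpoly_eval n p t = f t" using f unfolding polyfun_def by blast
  define S where "S = {a. p a \<noteq> 0}"
  have fS: "finite S" using p(1) unfolding is_mpoly_def S_def by simp
  have "polyfun n (\<lambda>t. t m ^ N * f (t(m := \<rho> / t m)))" if N: "N \<ge> mdeg n p" for N
  proof -
    have "polyfun n (\<lambda>t. \<Sum>a\<in>S. p a * (\<rho> ^ a m * t m ^ (N - a m) * (\<Prod>i\<in>{1..n}-{m}. t i ^ a i)))"
    proof (intro polyfun_sum fS polyfun_mult polyfun_const polyfun_prod)
      show "finite ({1..n} - {m})" by simp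
      fix a i assume "i \<in> {1..n} - {m}"
      then show "polyfun n (\<lambda>t. t i ^ a i)" by (intro polyfun_power polyfun_var) simp
    next
      fix a show "polyfun n (\<lambda>t. t m ^ (N - a m))" by (intro polyfun_power polyfun_var m)
    qed
    then show ?thesis
    proof (rule polyfun_cong)
      fix t assume t: "torus n t"
      have tm: "t m \<noteq> 0" using t m unfolding torus_def by auto
      have t': "torus n (t(m := \<rho> / t m))" using t tm rho unfolding torus_def by auto
      have "t m ^ N * f (t(m := \<rho> / t m)) = t m ^ N * (\<Sum>a\<in>S. p a * mon n a (t(m := \<rho> / t m)))"
        using p(2)[OF t'] eval_superset[OF fS, of p n] by (simp add: S_def)
      also have "\<dots> = (\<Sum>a\<in>S. p a * (t m ^ N * mon n a (t(m := \<rho> / t m))))"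
        by (simp add: sum_distrib_left mult_ac)
      also have "\<dots> = (\<Sum>a\<in>S. p a * (\<rho> ^ a m * t m ^ (N - a m) * (\<Prod>i\<in>{1..n}-{m}. t i ^ a i)))"
      proof (rule sum.cong)
        fix a assume a: "a \<in> S"
        have am: "a m \<le> N" using mdeg_ge[OF p(1), of a m] a m N by (simp add: S_def)
        have "mon n a (t(m := \<rho> / t m)) = (\<rho> / t m) ^ a m * (\<Prod>i\<in>{1..n}-{m}. t i ^ a i)"
          unfolding mon_def using m by (subst prod.remove[of _ m]) (auto intro!: prod.cong)
        moreover have "t m ^ N = t m ^ a m * t m ^ (N - a m)" using am by (simp flip: power_add)
        moreover have "(\<rho> / t m) ^ a m * t m ^ a m = \<rho> ^ a m" using tm by (simp add: power_divide)
        ultimately show "p a * (t m ^ N * mon n a (t(m := \<rho> / t m))) =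
           p a * (\<rho> ^ a m * t m ^ (N - a m) * (\<Prod>i\<in>{1..n}-{m}. t i ^ a i))"
          using tm by (simp add: power_divide field_simps)
      qed simp
      finally show "(\<Sum>a\<in>S. p a * (\<rho> ^ a m * t m ^ (N - a m) * (\<Prod>i\<in>{1..n}-{m}. t i ^ a i))) =
         t m ^ N * f (t(m := \<rho> / t m))" by simp
    qed
  qed
  then show ?thesis by blast
qed

definition pv :: "nat \<Rightarrow> nat \<Rightarrow> nat" where
  "pv n j = (if j = 0 then 1 else if j \<le> n then j else 1)"

lemma pv_in: "n \<ge> 1 \<Longrightarrow> pv n j \<in> {1..n}" unfolding pv_def by auto

lemma torus_sact: "q \<noteq> 0 \<Longrightarrow> torus n t \<Longrightarrow> torus n (sact n q j t)"
  unfolding torus_def sact_def by auto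

lemma sact_invol: "q \<noteq> 0 \<Longrightarrow> sact n q j (sact n q j t) = t"
  unfolding sact_def by (auto simp: fun_eq_iff)

lemma polyfun_sact:
  assumes f: "polyfun n f" and q: "q \<noteq> 0" and n: "n \<ge> 1"
  shows "\<exists>N0. \<forall>N\<ge>N0. polyfun n (\<lambda>t. t (pv n j) ^ N * f (sact n q j t))"
proof -
  consider "j = 0" | "0 < j \<and> j < n" | "j = n" | "j > n" by linarith
  then show ?thesis
  proof cases
    case 1
    then show ?thesis using polyfun_invert[OF f _ q, of 1] n by (simp add: sact_def pv_def)
  next
    case 2
    have "polyfun n (\<lambda>t. f (sact n q j t))"
    proof (rule polyfun_compose[OF f])
      show "torus n (sact n q j t)" if "torus n t" for t using torus_sact[OF q that] .
      fix i assume i: "i \<in> {1..n}"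
      have "(\<lambda>t. sact n q j t i) = (\<lambda>t. t (if i = j then Suc j else if i = Suc j then j else i))"
        using 2 by (auto simp: sact_def fun_eq_iff)
      moreover have "polyfun n (\<lambda>t. t (if i = j then Suc j else if i = Suc j then j else i))"
        by (rule polyfun_var) (use i 2 in auto)
      ultimately show "polyfun n (\<lambda>t. sact n q j t i)" by simp
    qed
    then have "polyfun n (\<lambda>t. t (pv n j) ^ N * f (sact n q j t))" for N
      by (intro polyfun_mult polyfun_power polyfun_var pv_in n)
    then show ?thesis by blast
  next
    case 3
    have "\<exists>N0. \<forall>N\<ge>N0. polyfun n (\<lambda>t. t n ^ N * f (t(n := 1 / t n)))"
      by (rule polyfun_invert[OF f]) (use n in auto)
    then show ?thesis using 3 n by (simp add: sact_def pv_def inverse_eq_divide)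
  next
    case 4
    then have "polyfun n (\<lambda>t. t (pv n j) ^ N * f (sact n q j t))" for N
      using polyfun_mult[OF polyfun_power[OF polyfun_var[OF pv_in[OF n]]] f] by (simp add: sact_def)
    then show ?thesis by blast
  qed
qed

lemma gen_sact:
  assumes g: "gen n F G" and q: "q \<noteq> 0" and n: "n \<ge> 1"
  shows "gen n (\<lambda>t. F (sact n q j t)) (\<lambda>t. G (sact n q j t))"
proof -
  obtain f where f: "good n f" "\<forall>t. torus n t \<and> f t \<noteq> 0 \<longrightarrow> F t = G t" using g unfolding gen_def by blast
  obtain N0 where N0: "\<forall>N\<ge>N0. polyfun n (\<lambda>t. t (pv n j) ^ N * f (sact n q j t))"
    using polyfun_sact[OF _ q n] f(1) unfolding good_def by blast
  obtain t0 where t0: "torus n t0" "f t0 \<noteq> 0" using f(1) unfolding good_def by blast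
  define t1 where "t1 = sact n q j t0"
  have t1: "torus n t1" using torus_sact[OF q t0(1)] by (simp add: t1_def)
  then have "t1 (pv n j) \<noteq> 0" using pv_in[OF n] unfolding torus_def by blast
  then have "t1 (pv n j) ^ N0 * f (sact n q j t1) \<noteq> 0" using t0 sact_invol[OF q] by (simp add: t1_def)
  then have "good n (\<lambda>t. t (pv n j) ^ N0 * f (sact n q j t))" unfolding good_def using N0 t1 by blast
  moreover have "F (sact n q j t) = G (sact n q j t)"
    if "torus n t" "t (pv n j) ^ N0 * f (sact n q j t) \<noteq> 0" for t
    using f(2) torus_sact[OF q that(1)] that(2) by simp
  ultimately show ?thesis unfolding gen_def by blast
qed

lemma gen_foldr:
  assumes q: "q \<noteq> 0" and n: "n \<ge> 1"
  shows "gen n F G \<Longrightarrow> gen n (\<lambda>t. F (foldr (sact n q) l t)) (\<lambda>t. G (foldr (sact n q) l t))"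
proof (induction l arbitrary: F G)
  case Nil then show ?case by simp
next
  case (Cons j l)
  have "gen n (\<lambda>t. F (sact n q j t)) (\<lambda>t. G (sact n q j t))" by (rule gen_sact[OF Cons.prems q n])
  from Cons.IH[OF this] show ?case by simp
qed

lemma lin_add: "Vector_Spaces.linear sc sc A \<Longrightarrow> A (x + y) = A x + A y"
  unfolding linear_iff_module_hom by (rule module_hom.add)
lemma lin_scale: "Vector_Spaces.linear sc sc A \<Longrightarrow> A (sc c x) = sc c (A x)"
  unfolding linear_iff_module_hom by (rule module_hom.scale)
lemma lin_sum: "Vector_Spaces.linear sc sc A \<Longrightarrow> A (sum f S) = (\<Sum>a\<in>S. A (f a))"
  unfolding linear_iff_module_hom by (rule module_hom.sum)
lemma lin_comp: "Vector_Spaces.linear sc sc A \<Longrightarrow> Vector_Spaces.linear sc sc B \<Longrightarrow> Vector_Spaces.linear sc sc (\<lambda>v. A (B v))"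
  using Vector_Spaces.linear_compose[of sc sc B sc A] by (simp add: comp_def)
lemma lin_id: "vector_space sc \<Longrightarrow> Vector_Spaces.linear sc sc (\<lambda>v. v)"
  using vector_space.linear_id[of sc] by (simp add: id_def)

lemma sum_div_mod:
  fixes X :: "nat \<Rightarrow> nat \<Rightarrow> 'b::comm_monoid_add"
  shows "(\<Sum>r<m * m'. X (r div m') (r mod m')) = (\<Sum>k<m. \<Sum>l<m'. X k l)"
proof -
  have "(\<Sum>r<m * m'. X (r div m') (r mod m')) = (\<Sum>kl\<in>{..<m} \<times> {..<m'}. X (fst kl) (snd kl))"
  proof (rule sum.reindex_bij_witness[of _ "\<lambda>kl. fst kl * m' + snd kl" "\<lambda>r. (r div m', r mod m')"])
    fix r assume r: "r \<in> {..<m * m'}"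
    then have "m' > 0" by (cases m') auto
    show "fst (r div m', r mod m') * m' + snd (r div m', r mod m') = r" by simp
    show "(r div m', r mod m') \<in> {..<m} \<times> {..<m'}" using r \<open>m' > 0\<close>
      by (auto simp: less_mult_imp_div_less)
    show "X (fst (r div m', r mod m')) (snd (r div m', r mod m')) = X (r div m') (r mod m')" by simp
  next
    fix kl :: "nat \<times> nat" assume kl: "kl \<in> {..<m} \<times> {..<m'}"
    then obtain k l where [simp]: "kl = (k, l)" and k: "k < m" and l: "l < m'" by auto
    show "((fst kl * m' + snd kl) div m', (fst kl * m' + snd kl) mod m') = kl" using l by simp
    have "k * m' + l < k * m' + m'" using l by simp
    also have "\<dots> = Suc k * m'" by simp
    also have "\<dots> \<le> m * m'" using k by (intro mult_right_mono) auto
    finally show "fst kl * m' + snd kl \<in> {..<m * m'}" by simp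
  qed
  also have "\<dots> = (\<Sum>k<m. \<Sum>l<m'. X k l)" by (simp add: sum.cartesian_product case_prod_beta)
  finally show ?thesis .
qed

definition ratE :: "(complex \<Rightarrow> 'v::ab_group_add \<Rightarrow> 'v) \<Rightarrow> nat \<Rightarrow> ((nat \<Rightarrow> complex) \<Rightarrow> 'v \<Rightarrow> 'v) \<Rightarrow> bool" where
  "ratE sc n FF \<longleftrightarrow> (\<exists>g (m::nat) f A. good n g \<and> (\<forall>k<m. polyfun n (f k) \<and> Vector_Spaces.linear sc sc (A k)) \<and>
      (\<forall>t. torus n t \<and> g t \<noteq> 0 \<longrightarrow> FF t = (\<lambda>v. \<Sum>k<m. sc (f k t / g t) (A k v))))"

lemma ratE_rat_end: assumes "ratE sc n F" shows "rat_end sc n F"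
proof -
  obtain g and m :: nat and f A where g: "good n g" and fA: "\<forall>k<m. polyfun n (f k) \<and> Vector_Spaces.linear sc sc (A k)"
    and F: "\<forall>t. torus n t \<and> g t \<noteq> 0 \<longrightarrow> F t = (\<lambda>v. \<Sum>k<m. sc (f k t / g t) (A k v))"
    using assms unfolding ratE_def by blast
  obtain d where d: "nonzero_mpoly n d" "\<forall>t. torus n t \<longrightarrow> mpoly_eval n d t = g t" using good_nonzero[OF g] by blast
  have "\<forall>k. \<exists>p. k < m \<longrightarrow> is_mpoly n p \<and> (\<forall>t. torus n t \<longrightarrow> mpoly_eval n p t = f k t)"
    using fA unfolding polyfun_def by blast
  then obtain p where p: "\<And>k. k < m \<Longrightarrow> is_mpoly n (p k) \<and> (\<forall>t. torus n t \<longrightarrow> mpoly_eval n (p k) t = f k t)"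
    by metis
  show ?thesis unfolding rat_end_def
  proof (intro exI conjI allI impI)
    show "nonzero_mpoly n d" by (rule d(1))
    fix k assume "k < m"
    then show "is_mpoly n (p k)" "Vector_Spaces.linear sc sc (A k)" using p fA by auto
  next
    fix t assume t: "torus n t \<and> mpoly_eval n d t \<noteq> 0"
    then have "g t \<noteq> 0" using d(2) by auto
    then have "F t = (\<lambda>v. \<Sum>k<m. sc (f k t / g t) (A k v))" using F t by auto
    also have "\<dots> = (\<lambda>v. \<Sum>k<m. sc (mpoly_eval n (p k) t / mpoly_eval n d t) (A k v))"
      using p d(2) t by (intro ext sum.cong) auto
    finally show "F t = (\<lambda>v. \<Sum>k<m. sc (mpoly_eval n (p k) t / mpoly_eval n d t) (A k v))" .
  qed
qed

lemma ratE_comp: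
  assumes vs: "vector_space sc" and F: "ratE sc n F" and G: "ratE sc n G"
  shows "ratE sc n (\<lambda>t. F t \<circ> G t)"
proof -
  interpret vector_space sc by fact
  obtain g and m :: nat and f A where g: "good n g" and fA: "\<forall>k<m. polyfun n (f k) \<and> Vector_Spaces.linear sc sc (A k)"
    and Fe: "\<forall>t. torus n t \<and> g t \<noteq> 0 \<longrightarrow> F t = (\<lambda>v. \<Sum>k<m. sc (f k t / g t) (A k v))"
    using F unfolding ratE_def by blast
  obtain g' and m' :: nat and f' A' where g': "good n g'" and fA': "\<forall>k<m'. polyfun n (f' k) \<and> Vector_Spaces.linear sc sc (A' k)"
    and Ge: "\<forall>t. torus n t \<and> g' t \<noteq> 0 \<longrightarrow> G t = (\<lambda>v. \<Sum>k<m'. sc (f' k t / g' t) (A' k v))"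
    using G unfolding ratE_def by blast
  define ff where "ff = (\<lambda>r t. f (r div m') t * f' (r mod m') t)"
  define AA where "AA = (\<lambda>r v. A (r div m') (A' (r mod m') v))"
  show ?thesis unfolding ratE_def
  proof (intro exI conjI allI impI)
    show "good n (\<lambda>t. g t * g' t)" by (rule good_mult[OF g g'])
    fix r assume r: "r < m * m'"
    then have "m' > 0" by (cases m') auto
    then have "r div m' < m" "r mod m' < m'" using r by (auto simp: less_mult_imp_div_less)
    then show "polyfun n (ff r)" "Vector_Spaces.linear sc sc (AA r)"
      using fA fA' unfolding ff_def AA_def by (auto intro: polyfun_mult lin_comp)
  next
    fix t assume t: "torus n t \<and> g t * g' t \<noteq> 0"
    show "F t \<circ> G t = (\<lambda>v. \<Sum>r<m * m'. sc (ff r t / (g t * g' t)) (AA r v))"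
    proof
      fix v
      have "(F t \<circ> G t) v = (\<Sum>k<m. sc (f k t / g t) (A k (\<Sum>l<m'. sc (f' l t / g' t) (A' l v))))"
        using Fe Ge t by simp
      also have "\<dots> = (\<Sum>k<m. \<Sum>l<m'. sc (f k t * f' l t / (g t * g' t)) (A k (A' l v)))"
      proof (intro sum.cong refl)
        fix k assume "k \<in> {..<m}"
        then have lin: "Vector_Spaces.linear sc sc (A k)" using fA by simp
        show "sc (f k t / g t) (A k (\<Sum>l<m'. sc (f' l t / g' t) (A' l v))) =
            (\<Sum>l<m'. sc (f k t * f' l t / (g t * g' t)) (A k (A' l v)))"
          by (simp add: lin_sum[OF lin] lin_scale[OF lin] scale_sum_right times_divide_times_eq)
      qed simp
      also have "\<dots> = (\<Sum>r<m * m'. sc (ff r t / (g t * g' t)) (AA r v))"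
        unfolding ff_def AA_def by (rule sum_div_mod[symmetric])
      finally show "(F t \<circ> G t) v = (\<Sum>r<m * m'. sc (ff r t / (g t * g' t)) (AA r v))" .
    qed
  qed
qed

lemma ratE_sact:
  assumes F: "ratE sc n F" and q: "q \<noteq> 0" and n: "n \<ge> 1"
  shows "ratE sc n (\<lambda>t. F (sact n q j t))"
proof -
  obtain g and m :: nat and f A where g: "good n g" and fA: "\<forall>k<m. polyfun n (f k) \<and> Vector_Spaces.linear sc sc (A k)"
    and Fe: "\<forall>t. torus n t \<and> g t \<noteq> 0 \<longrightarrow> F t = (\<lambda>v. \<Sum>k<m. sc (f k t / g t) (A k v))"
    using F unfolding ratE_def by blast
  have "\<forall>k. \<exists>N0. k < m \<longrightarrow> (\<forall>N\<ge>N0. polyfun n (\<lambda>t. t (pv n j) ^ N * f k (sact n q j t)))"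
    using polyfun_sact[OF _ q n] fA by blast
  then obtain N0 where N0: "\<And>k N. k < m \<Longrightarrow> N \<ge> N0 k \<Longrightarrow> polyfun n (\<lambda>t. t (pv n j) ^ N * f k (sact n q j t))"
    by metis
  obtain Ng where Ng: "\<And>N. N \<ge> Ng \<Longrightarrow> polyfun n (\<lambda>t. t (pv n j) ^ N * g (sact n q j t))"
    using polyfun_sact[OF _ q n] g unfolding good_def by blast
  define N where "N = Ng + (\<Sum>k<m. N0 k)"
  have NN: "N \<ge> N0 k" if "k < m" for k
    using that unfolding N_def by (metis finite_lessThan lessThan_iff member_le_sum trans_le_add2 zero_le)
  define g2 where "g2 = (\<lambda>t. t (pv n j) ^ N * g (sact n q j t))"
  define f2 where "f2 = (\<lambda>k t. t (pv n j) ^ N * f k (sact n q j t))"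
  have g2: "good n g2"
  proof -
    obtain t0 where t0: "torus n t0" "g t0 \<noteq> 0" using g unfolding good_def by blast
    define t1 where "t1 = sact n q j t0"
    have t1: "torus n t1" using torus_sact[OF q t0(1)] by (simp add: t1_def)
    then have "t1 (pv n j) \<noteq> 0" using pv_in[OF n] unfolding torus_def by blast
    then have "g2 t1 \<noteq> 0" using t0 sact_invol[OF q] by (simp add: t1_def g2_def)
    moreover have "polyfun n g2" unfolding g2_def by (rule Ng) (simp add: N_def)
    ultimately show ?thesis unfolding good_def using t1 by blast
  qed
  show ?thesis unfolding ratE_def
  proof (intro exI conjI allI impI)
    show "good n g2" by (rule g2)
    fix k assume "k < m"
    then show "polyfun n (f2 k)" "Vector_Spaces.linear sc sc (A k)" using N0[OF _ NN] fA unfolding f2_def by auto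
  next
    fix t assume t: "torus n t \<and> g2 t \<noteq> 0"
    then have tp: "t (pv n j) ^ N \<noteq> 0" and gs: "g (sact n q j t) \<noteq> 0" unfolding g2_def by auto
    have "F (sact n q j t) = (\<lambda>v. \<Sum>k<m. sc (f k (sact n q j t) / g (sact n q j t)) (A k v))"
      using Fe torus_sact[OF q] t gs by blast
    also have "\<dots> = (\<lambda>v. \<Sum>k<m. sc (f2 k t / g2 t) (A k v))"
      unfolding f2_def g2_def by (simp only: mult_divide_mult_cancel_left[OF tp])
    finally show "F (sact n q j t) = (\<lambda>v. \<Sum>k<m. sc (f2 k t / g2 t) (A k v))" .
  qed
qed

definition fac :: "(complex \<Rightarrow> 'v::ab_group_add \<Rightarrow> 'v) \<Rightarrow> complex \<Rightarrow> complex \<Rightarrow> ('v \<Rightarrow> 'v) \<Rightarrow> 'v \<Rightarrow> 'v" where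
  "fac sc a b Q v = sc a v + sc b (Q v)"

definition ev8 :: "(complex \<Rightarrow> 'v::ab_group_add \<Rightarrow> 'v) \<Rightarrow> ('v \<Rightarrow> 'v) \<Rightarrow> ('v \<Rightarrow> 'v) \<Rightarrow> (nat \<Rightarrow> complex) \<Rightarrow> 'v \<Rightarrow> 'v" where
  "ev8 sc A B c v = sc (c 0) v + sc (c 1) (A v) + sc (c 2) (B v) + sc (c 3) (A (B v)) + sc (c 4) (B (A v))
     + sc (c 5) (A (B (A v))) + sc (c 6) (B (A (B v))) + sc (c 7) (A (B (A (B v))))"

definition mA8 :: "complex \<Rightarrow> complex \<Rightarrow> complex \<Rightarrow> (nat \<Rightarrow> complex) \<Rightarrow> nat \<Rightarrow> complex" where
  "mA8 cA a b c i = a * c i + b * ([c 1, c 0 + cA * c 1, c 3, c 2 + cA * c 3, c 5, c 4 + cA * c 5, c 7, c 6 + cA * c 7] ! i)"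

definition mB8 :: "complex \<Rightarrow> complex \<Rightarrow> complex \<Rightarrow> (nat \<Rightarrow> complex) \<Rightarrow> nat \<Rightarrow> complex" where
  "mB8 cB a b c i = a * c i + b * ([c 2, c 4, c 0 + cB * c 2, c 6, c 1 + cB * c 4, c 7, c 3 + cB * c 6, c 5 + cB * c 7] ! i)"

locale dih =
  fixes sc :: "complex \<Rightarrow> 'v::ab_group_add \<Rightarrow> 'v" and A B :: "'v \<Rightarrow> 'v" and cA cB :: complex
  assumes vs: "vector_space sc"
    and linA: "Vector_Spaces.linear sc sc A" and linB: "Vector_Spaces.linear sc sc B"
    and qA: "\<And>v. A (A v) = sc cA (A v) + v" and qB: "\<And>v. B (B v) = sc cB (B v) + v"
begin

interpretation vector_space sc by (rule vs)

lemma Aadd: "A (x + y) = A x + A y" by (rule lin_add[OF linA])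
lemma Ascale: "A (sc r x) = sc r (A x)" by (rule lin_scale[OF linA])
lemma Badd: "B (x + y) = B x + B y" by (rule lin_add[OF linB])
lemma Bscale: "B (sc r x) = sc r (B x)" by (rule lin_scale[OF linB])

end

locale dih8 = dih +
  assumes br: "\<And>v. A (B (A (B v))) = B (A (B (A v)))"
begin

interpretation vector_space sc by (rule vs)

lemma facA8: "fac sc a b A (ev8 sc A B c v) = ev8 sc A B (mA8 cA a b c) v"
  unfolding fac_def ev8_def mA8_def
  by (simp add: Aadd Ascale qA br[symmetric] scale_right_distrib scale_left_distrib algebra_simps)

lemma facB8: "fac sc a b B (ev8 sc A B c v) = ev8 sc A B (mB8 cB a b c) v"
  unfolding fac_def ev8_def mB8_def
  by (simp add: Badd Bscale qB br scale_right_distrib scale_left_distrib algebra_simps)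

lemma ev8_init: "ev8 sc A B (\<lambda>i. if i = 0 then 1 else 0) v = v"
  unfolding ev8_def by simp

lemma ev8_cong: "(\<And>i. i < 8 \<Longrightarrow> c i = d i) \<Longrightarrow> ev8 sc A B c v = ev8 sc A B d v"
  unfolding ev8_def by (simp add: numeral_eq_Suc)

end

context dih8 begin

lemma refl8:
  assumes x: "x \<noteq> 0"
  shows "fac sc (e*x - cA) (1 - x^2) A (fac sc (-cB) (1 - x*y) B (fac sc (e*y - cA) (1 - y^2) A (fac sc (-cB) (1 - y/x) B v)))
   = fac sc (-cB) (1 - y/x) B (fac sc (e*y - cA) (1 - y^2) A (fac sc (-cB) (1 - x*y) B (fac sc (e*x - cA) (1 - x^2) A v)))"
proof -
  define I where "I = (\<lambda>i::nat. if i = 0 then 1 else (0::complex))"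
  have v: "v = ev8 sc A B I v" unfolding I_def by (rule ev8_init[symmetric])
  show ?thesis
    apply (subst (1 2) v)
    apply (simp only: facA8 facB8)
    apply (rule ev8_cong)
    apply (auto simp: less_Suc_eq numeral_eq_Suc mA8_def mB8_def I_def)
    using x by (auto simp: field_simps power2_eq_square)
qed

end

definition ev6 :: "(complex \<Rightarrow> 'v::ab_group_add \<Rightarrow> 'v) \<Rightarrow> ('v \<Rightarrow> 'v) \<Rightarrow> ('v \<Rightarrow> 'v) \<Rightarrow> (nat \<Rightarrow> complex) \<Rightarrow> 'v \<Rightarrow> 'v" where
  "ev6 sc A B c v = sc (c 0) v + sc (c 1) (A v) + sc (c 2) (B v) + sc (c 3) (A (B v)) + sc (c 4) (B (A v))
     + sc (c 5) (A (B (A v)))"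

definition mA6 :: "complex \<Rightarrow> complex \<Rightarrow> complex \<Rightarrow> (nat \<Rightarrow> complex) \<Rightarrow> nat \<Rightarrow> complex" where
  "mA6 cA a b c i = a * c i + b * ([c 1, c 0 + cA * c 1, c 3, c 2 + cA * c 3, c 5, c 4 + cA * c 5] ! i)"

definition mB6 :: "complex \<Rightarrow> complex \<Rightarrow> complex \<Rightarrow> (nat \<Rightarrow> complex) \<Rightarrow> nat \<Rightarrow> complex" where
  "mB6 cB a b c i = a * c i + b * ([c 2, c 4, c 0 + cB * c 2, c 5, c 1 + cB * c 4, c 3 + cB * c 5] ! i)"

locale dih6 = dih +
  assumes br3: "\<And>v. A (B (A v)) = B (A (B v))"
begin

interpretation vector_space sc by (rule vs)

lemma facA6: "fac sc a b A (ev6 sc A B c v) = ev6 sc A B (mA6 cA a b c) v"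
  unfolding fac_def ev6_def mA6_def
  by (simp add: Aadd Ascale qA scale_right_distrib scale_left_distrib algebra_simps)

lemma hB5: "B (A (B (A v))) = sc cB (A (B (A v))) + A (B v)"
proof -
  have "B (A (B (A v))) = B (B (A (B v)))" by (simp add: br3)
  also have "\<dots> = sc cB (B (A (B v))) + A (B v)" by (rule qB)
  finally show ?thesis by (simp add: br3)
qed

lemma facB6: "fac sc a b B (ev6 sc A B c v) = ev6 sc A B (mB6 cB a b c) v"
  unfolding fac_def ev6_def mB6_def
  apply (simp only: Badd Bscale)
  apply (simp only: hB5)
  by (simp add: Badd Bscale qB br3[symmetric] scale_right_distrib scale_left_distrib algebra_simps)

lemma ev6_init: "ev6 sc A B (\<lambda>i. if i = 0 then 1 else 0) v = v"
  unfolding ev6_def by simp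

lemma ev6_cong: "(\<And>i. i < 6 \<Longrightarrow> c i = d i) \<Longrightarrow> ev6 sc A B c v = ev6 sc A B d v"
  unfolding ev6_def by (simp add: numeral_eq_Suc)

lemma ybe6:
  assumes "cB = cA"
  shows "fac sc (-cA) (1 - x) A (fac sc (-cA) (1 - x*y) B (fac sc (-cA) (1 - y) A v))
   = fac sc (-cA) (1 - y) B (fac sc (-cA) (1 - x*y) A (fac sc (-cA) (1 - x) B v))"
proof -
  define I where "I = (\<lambda>i::nat. if i = 0 then 1 else (0::complex))"
  have v: "v = ev6 sc A B I v" unfolding I_def by (rule ev6_init[symmetric])
  show ?thesis
    apply (subst (1 2) v)
    apply (simp only: facA6 facB6)
    apply (rule ev6_cong)
    apply (auto simp: less_Suc_eq numeral_eq_Suc mA6_def mB6_def I_def assms)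
    by (auto simp: algebra_simps)
qed

end

lemma (in dih) sq2:
  "fac sc a b A (fac sc a' b' A v) = fac sc (a*a' + b*b') (a*b' + b*a' + b*b'*cA) A v"
proof -
  interpret vector_space sc by (rule vs)
  show ?thesis unfolding fac_def by (simp add: Aadd Ascale qA scale_right_distrib scale_left_distrib algebra_simps)
qed

lemma (in dih) comm2:
  assumes "\<And>v. A (B v) = B (A v)"
  shows "fac sc a b A (fac sc a' b' B v) = fac sc a' b' B (fac sc a b A v)"
proof -
  interpret vector_space sc by (rule vs)
  show ?thesis unfolding fac_def by (simp add: Aadd Ascale Badd Bscale assms algebra_simps)
qed

locale hk =
  fixes sc :: "complex \<Rightarrow> 'v::ab_group_add \<Rightarrow> 'v" and n :: nat and k0 k kn q qh u0 un :: complex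
    and P :: "nat \<Rightarrow> 'v \<Rightarrow> 'v"
  assumes vs: "vector_space sc" and n2: "n \<ge> 2" and k0: "k0 \<noteq> 0" and kk: "k \<noteq> 0" and kn: "kn \<noteq> 0"
    and q: "q \<noteq> 0" and qh: "qh ^ 2 = q" and u0: "u0 \<noteq> 0" and un: "un \<noteq> 0" and rep: "is_rep sc n k0 k kn P"
begin

interpretation V: vector_space sc by (rule vs)

definition cc where "cc j = kap n k0 k kn j - inverse (kap n k0 k kn j)"

lemma kap_nz: "kap n k0 k kn j \<noteq> 0" using k0 kk kn by (simp add: kap_def)

lemma linP: "j \<le> n \<Longrightarrow> Vector_Spaces.linear sc sc (P j)" using rep by (simp add: is_rep_def)

lemma quadP: assumes j: "j \<le> n" shows "P j (P j v) = sc (cc j) (P j v) + v"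
proof -
  define \<kappa> where "\<kappa> = kap n k0 k kn j"
  have \<kappa>: "\<kappa> \<noteq> 0" using kap_nz by (simp add: \<kappa>_def)
  have "(\<lambda>v. P j v - sc \<kappa> v) \<circ> (\<lambda>v. P j v + sc (inverse \<kappa>) v) = (\<lambda>v. 0)"
    using rep j unfolding is_rep_def \<kappa>_def by blast
  from fun_cong[OF this, of v]
  have "P j (P j v + sc (inverse \<kappa>) v) - sc \<kappa> (P j v + sc (inverse \<kappa>) v) = 0" by simp
  then have "P j (P j v) + sc (inverse \<kappa>) (P j v) - sc \<kappa> (P j v) - v = 0"
    using \<kappa> by (simp add: lin_add[OF linP[OF j]] lin_scale[OF linP[OF j]] V.scale_right_distrib algebra_simps)
  then have "P j (P j v) = sc \<kappa> (P j v) - sc (inverse \<kappa>) (P j v) + v"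
    by (simp add: algebra_simps eq_diff_eq diff_eq_eq)
  then show ?thesis by (simp add: cc_def \<kappa>_def[symmetric] V.scale_left_diff_distrib)
qed

lemma br0: "P 0 (P 1 (P 0 (P 1 v))) = P 1 (P 0 (P 1 (P 0 v)))"
  using fun_cong[of _ _ v, OF conjunct1[OF conjunct2[OF rep[unfolded is_rep_def]]]] by simp

lemma brn: "P (n-1) (P n (P (n-1) (P n v))) = P n (P (n-1) (P n (P (n-1) v)))"
  using fun_cong[of _ _ v, OF conjunct1[OF conjunct2[OF conjunct2[OF rep[unfolded is_rep_def]]]]] by simp

lemma bri: assumes "1 \<le> i" "i + 1 < n" shows "P i (P (i+1) (P i v)) = P (i+1) (P i (P (i+1) v))"
proof -
  have "P i \<circ> P (i + 1) \<circ> P i = P (i + 1) \<circ> P i \<circ> P (i + 1)" using rep assms unfolding is_rep_def by blast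
  from fun_cong[OF this, of v] show ?thesis by simp
qed

lemma commP: assumes "j \<le> n" "i + 1 < j" shows "P i (P j v) = P j (P i v)"
proof -
  have "P i \<circ> P j = P j \<circ> P i" using rep assms unfolding is_rep_def by blast
  from fun_cong[OF this, of v] show ?thesis by simp
qed

definition sK0 where "sK0 x = inverse (inverse k0 * (1 - k0 * u0 * x) * (1 + k0 * inverse u0 * x))"
definition sKn where "sKn x = inverse (inverse kn * (1 - kn * un * x) * (1 + kn * inverse un * x))"
definition sR where "sR x = inverse (inverse k * (1 - k ^ 2 * x))"

lemma Pinv_eq: "Pinv sc n k0 k kn P j v = P j v - sc (cc j) v"
  unfolding Pinv_def cc_def by simp

lemma K0V_nf: "K0V sc n k0 k kn P u0 x = (\<lambda>v. sc (sK0 x) (fac sc ((inverse u0 - u0) * x - cc 0) (1 - x^2) (P 0) v))"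
  unfolding K0V_def sK0_def fac_def Pinv_eq by (simp add: algebra_simps)

lemma KnV_nf: "KnV sc n k0 k kn P un x = (\<lambda>v. sc (sKn x) (fac sc ((inverse un - un) * x - cc n) (1 - x^2) (P n) v))"
  unfolding KnV_def sKn_def fac_def Pinv_eq by (simp add: algebra_simps)

lemma RV_nf: "RV sc n k0 k kn P j x = (\<lambda>v. sc (sR x) (fac sc (- cc j) (1 - x) (P j) v))"
  unfolding RV_def sR_def fac_def Pinv_eq by (simp add: algebra_simps)

lemma fac_scale: "j \<le> n \<Longrightarrow> fac sc a b (P j) (sc s X) = sc s (fac sc a b (P j) X)"
  unfolding fac_def by (simp add: lin_scale[OF linP] V.scale_right_distrib mult.commute)

definition Cj where "Cj j t = (if j = 0 then K0V sc n k0 k kn P u0 (qh / t 1)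
   else if j < n then RV sc n k0 k kn P j (t j / t (Suc j))
   else if j = n then KnV sc n k0 k kn P un (t n) else id)"

primrec Cw where
  "Cw [] t = id"
| "Cw (j # w) t = Cj j t \<circ> Cw w (sact n q j t)"

lemma Cw_braid0: assumes t: "torus n t" shows "Cw [0,1,0,1] t = Cw [1,0,1,0] t"
proof -
  have t1: "t (Suc 0) \<noteq> 0" and t2: "t (Suc (Suc 0)) \<noteq> 0" using t n2 unfolding torus_def by auto
  have qh0: "qh \<noteq> 0" using qh q by auto
  define x where "x = qh / t (Suc 0)"
  define y where "y = qh / t (Suc (Suc 0))"
  have x0: "x \<noteq> 0" using qh0 t1 by (simp add: x_def)
  have e1: "q / (t (Suc 0) * t (Suc (Suc 0))) = x * y" unfolding x_def y_def using qh by (simp add: power2_eq_square)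
  have e2: "t (Suc 0) / t (Suc (Suc 0)) = y / x" unfolding x_def y_def using qh0 t1 t2 by (simp add: field_simps)
  have L: "Cw [0,1,0,1] t = (\<lambda>v. K0V sc n k0 k kn P u0 x (RV sc n k0 k kn P 1 (x*y)
       (K0V sc n k0 k kn P u0 y (RV sc n k0 k kn P 1 (y/x) v))))"
    using n2 q by (simp add: Cj_def sact_def fun_eq_iff e1 e2 x_def[symmetric] y_def[symmetric])
  have e3: "q / (t (Suc (Suc 0)) * t (Suc 0)) = x * y" using e1 by (simp add: mult.commute)
  have R: "Cw [1,0,1,0] t = (\<lambda>v. RV sc n k0 k kn P 1 (y/x) (K0V sc n k0 k kn P u0 y
       (RV sc n k0 k kn P 1 (x*y) (K0V sc n k0 k kn P u0 x v))))"
    using n2 q by (simp add: Cj_def sact_def fun_eq_iff e1 e2 e3 x_def[symmetric] y_def[symmetric])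
  have D: "dih8 sc (P 0) (P 1) (cc 0) (cc 1)"
    unfolding dih8_def dih_def dih8_axioms_def
    using vs linP[of 0] linP[of 1] n2 quadP[of 0] quadP[of 1] br0 by auto
  interpret d: dih8 sc "P 0" "P 1" "cc 0" "cc 1" by (rule D)
  have f0: "fac sc a b (P 0) (sc s X) = sc s (fac sc a b (P 0) X)" for a b s X by (rule fac_scale) simp
  have f1: "fac sc a b (P 1) (sc s X) = sc s (fac sc a b (P 1) X)" for a b s X by (rule fac_scale) (use n2 in simp)
  show ?thesis unfolding L R
    apply (rule ext)
    apply (simp only: K0V_nf RV_nf f0 f1 V.scale_scale)
    apply (simp only: d.refl8[OF x0])
    apply (simp add: mult_ac)
    done
qed

lemma Cw_braidn: assumes t: "torus n t" shows "Cw [n-1,n,n-1,n] t = Cw [n,n-1,n,n-1] t"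
proof -
  have tx: "t (n-1) \<noteq> 0" and ty: "t n \<noteq> 0" using t n2 unfolding torus_def by auto
  define x where "x = t (n - Suc 0)"
  define y where "y = t n"
  have e1: "y / inverse x = y * x" "x / inverse y = y * x" "inverse y / inverse x = x / y" using tx ty by (auto simp: x_def y_def field_simps)
  have y0: "y \<noteq> 0" using ty by (simp add: y_def)
  have n1: "n - 1 \<noteq> 0" "n - 1 < n" "Suc (n - 1) = n" "n - 1 \<noteq> n" "n \<noteq> 0" using n2 by auto
  have L: "Cw [n-1,n,n-1,n] t = (\<lambda>v. RV sc n k0 k kn P (n-1) (x/y) (KnV sc n k0 k kn P un x
       (RV sc n k0 k kn P (n-1) (y*x) (KnV sc n k0 k kn P un y v))))"
    using n1 tx ty by (simp add: Cj_def sact_def fun_eq_iff x_def[symmetric] y_def[symmetric] e1)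
  have R: "Cw [n,n-1,n,n-1] t = (\<lambda>v. KnV sc n k0 k kn P un y (RV sc n k0 k kn P (n-1) (y*x)
       (KnV sc n k0 k kn P un x (RV sc n k0 k kn P (n-1) (x/y) v))))"
    using n1 tx ty by (simp add: Cj_def sact_def fun_eq_iff x_def[symmetric] y_def[symmetric] e1)
  have D: "dih8 sc (P n) (P (n-1)) (cc n) (cc (n-1))"
    unfolding dih8_def dih_def dih8_axioms_def
    using vs linP[of n] linP[of "n-1"] quadP[of n] quadP[of "n-1"] brn by auto
  interpret d: dih8 sc "P n" "P (n-1)" "cc n" "cc (n-1)" by (rule D)
  have f0: "fac sc a b (P n) (sc s X) = sc s (fac sc a b (P n) X)" for a b s X by (rule fac_scale) simp
  have f1: "fac sc a b (P (n-1)) (sc s X) = sc s (fac sc a b (P (n-1)) X)" for a b s X by (rule fac_scale) simp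
  show ?thesis unfolding L R
    apply (rule ext)
    apply (simp only: KnV_nf RV_nf f0 f1 V.scale_scale)
    apply (simp only: d.refl8[OF y0])
    apply (simp add: mult_ac)
    done
qed

lemma Cw_braidi: assumes t: "torus n t" and i: "1 \<le> i" "i + 1 < n" shows "Cw [i,i+1,i] t = Cw [i+1,i,i+1] t"
proof -
  have tx: "t i \<noteq> 0" and ty: "t (Suc i) \<noteq> 0" and tz: "t (Suc (Suc i)) \<noteq> 0"
    using t i unfolding torus_def by auto
  define x where "x = t i"
  define y where "y = t (Suc i)"
  define z where "z = t (Suc (Suc i))"
  have ii: "i \<noteq> 0" "i < n" "Suc i < n" "Suc i \<noteq> 0" using i by auto
  have L: "Cw [i,i+1,i] t = (\<lambda>w. RV sc n k0 k kn P i (x/y) (RV sc n k0 k kn P (Suc i) (x/z)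
       (RV sc n k0 k kn P i (y/z) w)))"
    using ii by (simp add: Cj_def sact_def fun_eq_iff x_def[symmetric] y_def[symmetric] z_def[symmetric])
  have R: "Cw [i+1,i,i+1] t = (\<lambda>w. RV sc n k0 k kn P (Suc i) (y/z) (RV sc n k0 k kn P i (x/z)
       (RV sc n k0 k kn P (Suc i) (x/y) w)))"
    using ii by (simp add: Cj_def sact_def fun_eq_iff x_def[symmetric] y_def[symmetric] z_def[symmetric])
  have D: "dih6 sc (P i) (P (Suc i)) (cc i) (cc (Suc i))"
    unfolding dih6_def dih_def dih6_axioms_def
    using vs linP[of i] linP[of "Suc i"] quadP[of i] quadP[of "Suc i"] bri[OF i] ii by auto
  interpret d: dih6 sc "P i" "P (Suc i)" "cc i" "cc (Suc i)" by (rule D)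
  have cce: "cc (Suc i) = cc i" using ii by (simp add: cc_def kap_def)
  have f0: "fac sc a b (P i) (sc s X) = sc s (fac sc a b (P i) X)" for a b s X by (rule fac_scale) (use ii in simp)
  have f1: "fac sc a b (P (Suc i)) (sc s X) = sc s (fac sc a b (P (Suc i)) X)" for a b s X by (rule fac_scale) (use ii in simp)
  have xyz: "x / y * (y / z) = x / z" using ty by (simp add: y_def)
  have Y: "fac sc (- cc i) (1 - x/y) (P i) (fac sc (- cc i) (1 - x/z) (P (Suc i)) (fac sc (- cc i) (1 - y/z) (P i) w))
     = fac sc (- cc i) (1 - y/z) (P (Suc i)) (fac sc (- cc i) (1 - x/z) (P i) (fac sc (- cc i) (1 - x/y) (P (Suc i)) w))" for w
    using d.ybe6[OF cce, of "x/y" "y/z" w] by (simp only: xyz)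
  show ?thesis unfolding L R
    apply (rule ext)
    apply (simp only: RV_nf f0 f1 V.scale_scale cce)
    apply (simp only: Y)
    apply (simp add: mult_ac)
    done
qed

end

lemma exists_avoid: "finite (X :: complex set) \<Longrightarrow> \<exists>z. z \<notin> X \<and> z \<noteq> 0"
  using ex_new_if_finite[OF infinite_UNIV_char_0[where 'a=complex], of "insert 0 X"] by auto

lemma inv_prod_one: "a \<noteq> 0 \<Longrightarrow> b \<noteq> 0 \<Longrightarrow> inverse a * inverse b * (a * b) = (1::complex)"
  by (simp add: field_simps)

lemma K_sq_id:
  fixes \<kappa> \<upsilon> x :: complex
  assumes k: "\<kappa> \<noteq> 0" and u: "\<upsilon> \<noteq> 0" and x: "x \<noteq> 0"
    and d1: "inverse \<kappa> * (1 - \<kappa>*\<upsilon>*x) * (1 + \<kappa>*inverse \<upsilon>*x) \<noteq> 0"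
    and d2: "inverse \<kappa> * (1 - \<kappa>*\<upsilon>*(1/x)) * (1 + \<kappa>*inverse \<upsilon>*(1/x)) \<noteq> 0"
  defines "c \<equiv> \<kappa> - inverse \<kappa>"
  shows "inverse (inverse \<kappa> * (1 - \<kappa>*\<upsilon>*x) * (1 + \<kappa>*inverse \<upsilon>*x)) *
         inverse (inverse \<kappa> * (1 - \<kappa>*\<upsilon>*(1/x)) * (1 + \<kappa>*inverse \<upsilon>*(1/x))) *
      (((inverse \<upsilon> - \<upsilon>)*x - c) * ((inverse \<upsilon> - \<upsilon>)*(1/x) - c) + (1 - x^2) * (1 - (1/x)^2)) = 1"
   and "inverse (inverse \<kappa> * (1 - \<kappa>*\<upsilon>*x) * (1 + \<kappa>*inverse \<upsilon>*x)) *
         inverse (inverse \<kappa> * (1 - \<kappa>*\<upsilon>*(1/x)) * (1 + \<kappa>*inverse \<upsilon>*(1/x))) *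
      (((inverse \<upsilon> - \<upsilon>)*x - c) * (1 - (1/x)^2) + (1 - x^2) * ((inverse \<upsilon> - \<upsilon>)*(1/x) - c)
        + (1 - x^2) * (1 - (1/x)^2) * c) = 0"
proof -
  have N: "((inverse \<upsilon> - \<upsilon>)*x - c) * ((inverse \<upsilon> - \<upsilon>)*(1/x) - c) + (1 - x^2) * (1 - (1/x)^2)
     = (inverse \<kappa> * (1 - \<kappa>*\<upsilon>*x) * (1 + \<kappa>*inverse \<upsilon>*x)) *
       (inverse \<kappa> * (1 - \<kappa>*\<upsilon>*(1/x)) * (1 + \<kappa>*inverse \<upsilon>*(1/x)))"
    unfolding c_def using k u x by (simp add: field_simps power2_eq_square; simp add: algebra_simps)
  have N2: "((inverse \<upsilon> - \<upsilon>)*x - c) * (1 - (1/x)^2) + (1 - x^2) * ((inverse \<upsilon> - \<upsilon>)*(1/x) - c)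
        + (1 - x^2) * (1 - (1/x)^2) * c = 0"
    unfolding c_def using k u x by (simp add: field_simps power2_eq_square; simp add: algebra_simps)
  show "inverse (inverse \<kappa> * (1 - \<kappa>*\<upsilon>*x) * (1 + \<kappa>*inverse \<upsilon>*x)) *
         inverse (inverse \<kappa> * (1 - \<kappa>*\<upsilon>*(1/x)) * (1 + \<kappa>*inverse \<upsilon>*(1/x))) *
      (((inverse \<upsilon> - \<upsilon>)*x - c) * ((inverse \<upsilon> - \<upsilon>)*(1/x) - c) + (1 - x^2) * (1 - (1/x)^2)) = 1"
    unfolding N by (rule inv_prod_one[OF d1 d2])
  show "inverse (inverse \<kappa> * (1 - \<kappa>*\<upsilon>*x) * (1 + \<kappa>*inverse \<upsilon>*x)) *
         inverse (inverse \<kappa> * (1 - \<kappa>*\<upsilon>*(1/x)) * (1 + \<kappa>*inverse \<upsilon>*(1/x))) *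
      (((inverse \<upsilon> - \<upsilon>)*x - c) * (1 - (1/x)^2) + (1 - x^2) * ((inverse \<upsilon> - \<upsilon>)*(1/x) - c)
        + (1 - x^2) * (1 - (1/x)^2) * c) = 0"
    unfolding N2 by simp
qed

lemma R_sq_id:
  fixes \<kappa> x :: complex
  assumes k: "\<kappa> \<noteq> 0" and x: "x \<noteq> 0" and d1: "inverse \<kappa> * (1 - \<kappa>^2*x) \<noteq> 0"
    and d2: "inverse \<kappa> * (1 - \<kappa>^2*(1/x)) \<noteq> 0"
  defines "c \<equiv> \<kappa> - inverse \<kappa>"
  shows "inverse (inverse \<kappa> * (1 - \<kappa>^2*x)) * inverse (inverse \<kappa> * (1 - \<kappa>^2*(1/x))) *
      ((-c) * (-c) + (1 - x) * (1 - 1/x)) = 1"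
   and "inverse (inverse \<kappa> * (1 - \<kappa>^2*x)) * inverse (inverse \<kappa> * (1 - \<kappa>^2*(1/x))) *
      ((-c) * (1 - 1/x) + (1 - x) * (-c) + (1 - x) * (1 - 1/x) * c) = 0"
proof -
  have N: "(-c) * (-c) + (1 - x) * (1 - 1/x) = (inverse \<kappa> * (1 - \<kappa>^2*x)) * (inverse \<kappa> * (1 - \<kappa>^2*(1/x)))"
    unfolding c_def using k x by (simp add: field_simps power2_eq_square; simp add: algebra_simps)
  have N2: "(-c) * (1 - 1/x) + (1 - x) * (-c) + (1 - x) * (1 - 1/x) * c = 0"
    unfolding c_def using k x by (simp add: field_simps power2_eq_square; simp add: algebra_simps)
  show "inverse (inverse \<kappa> * (1 - \<kappa>^2*x)) * inverse (inverse \<kappa> * (1 - \<kappa>^2*(1/x))) *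
      ((-c) * (-c) + (1 - x) * (1 - 1/x)) = 1" unfolding N by (rule inv_prod_one[OF d1 d2])
  show "inverse (inverse \<kappa> * (1 - \<kappa>^2*x)) * inverse (inverse \<kappa> * (1 - \<kappa>^2*(1/x))) *
      ((-c) * (1 - 1/x) + (1 - x) * (-c) + (1 - x) * (1 - 1/x) * c) = 0" unfolding N2 by simp
qed

context hk begin

interpretation V: vector_space sc by (rule vs)

lemma Cw_append: "Cw (w @ w') t = Cw w t \<circ> Cw w' (wact n q (rev w) t)"
  by (induction w arbitrary: t) (auto simp: wact_def)

lemma wact_cox: "cox_eq n x y \<Longrightarrow> wact n q (rev x) = wact n q (rev y)"
proof (induction rule: cox_eq.induct)
  case (ctx x y u v)
  have "foldr (sact n q) (rev x) = foldr (sact n q) (rev y)" using ctx.IH by (simp add: wact_def)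
  then show ?case by (simp add: wact_def)
next
  case (sq j)
  then show ?case using sact_invol[OF q] by (simp add: wact_def fun_eq_iff)
next
  case braid0
  then show ?case using n2 q by (auto simp: wact_def fun_eq_iff sact_def)
next
  case braidn
  then show ?case using n2 q by (auto simp: wact_def fun_eq_iff sact_def)
next
  case (braidi i)
  then show ?case using n2 q by (auto simp: wact_def fun_eq_iff sact_def)
next
  case (comm j i)
  then show ?case using n2 q by (auto simp: wact_def fun_eq_iff sact_def)
qed auto

lemma Cj_nf: assumes "j \<le> n" shows "\<exists>s a b. Cj j t = (\<lambda>v. sc s (fac sc a b (P j) v))"
proof -
  consider "j = 0" | "0 < j \<and> j < n" | "j = n" using assms by linarith
  then show ?thesis
  proof cases
    case 1 then show ?thesis unfolding Cj_def K0V_nf by auto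
  next
    case 2 then show ?thesis unfolding Cj_def RV_nf by auto
  next
    case 3 then show ?thesis using n2 unfolding Cj_def KnV_nf by auto
  qed
qed

lemma Cj_commute: assumes j: "j \<le> n" and ij: "i + 1 < j"
  shows "Cj i t \<circ> Cj j t' = Cj j t' \<circ> Cj i t"
proof -
  have i: "i \<le> n" using j ij by simp
  obtain s a b where 1: "Cj i t = (\<lambda>v. sc s (fac sc a b (P i) v))" using Cj_nf[OF i] by blast
  obtain s' a' b' where 2: "Cj j t' = (\<lambda>v. sc s' (fac sc a' b' (P j) v))" using Cj_nf[OF j] by blast
  have D: "dih sc (P i) (P j) (cc i) (cc j)"
    unfolding dih_def using vs linP[OF i] linP[OF j] quadP[OF i] quadP[OF j] by auto
  have c: "fac sc a b (P i) (fac sc a' b' (P j) v) = fac sc a' b' (P j) (fac sc a b (P i) v)" for v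
    by (rule dih.comm2[OF D]) (rule commP[OF j ij])
  show ?thesis unfolding 1 2
    by (rule ext) (simp add: fac_scale[OF i] fac_scale[OF j] c mult.commute V.scale_scale)
qed

lemma Cj_sact_other: assumes j: "j \<le> n" and ij: "i + 1 < j"
  shows "Cj j (sact n q i t) = Cj j t" "Cj i (sact n q j t) = Cj i t"
  using assms n2 by (auto simp: Cj_def sact_def)

lemma comm_exact: assumes j: "j \<le> n" and ij: "i + 1 < j" shows "Cw [i,j] t = Cw [j,i] t"
  using Cj_commute[OF j ij, of t t] Cj_sact_other[OF j ij] by simp

lemma good_witness:
  assumes "polyfun n g" "finite X" "\<And>z. z \<notin> X \<Longrightarrow> z \<noteq> 0 \<Longrightarrow> g (\<lambda>i. if i = m then z else 1) \<noteq> 0"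
  shows "good n g"
proof -
  obtain z where z: "z \<notin> X" "z \<noteq> 0" using exists_avoid[OF assms(2)] by blast
  have "torus n (\<lambda>i. if i = m then z else 1)" using z unfolding torus_def by auto
  then show ?thesis unfolding good_def using assms(1) assms(3)[OF z] by blast
qed

lemma sq_core:
  assumes j: "j \<le> n" and h1: "s * s' * (a*a' + b*b') = 1" and h2: "s * s' * (a*b' + b*a' + b*b'*cc j) = 0"
  shows "(\<lambda>v. sc s (fac sc a b (P j) v)) \<circ> ((\<lambda>v. sc s' (fac sc a' b' (P j) v)) \<circ> id) = id"
proof
  fix v
  have D: "dih sc (P j) (P j) (cc j) (cc j)" unfolding dih_def using vs linP[OF j] quadP[OF j] by auto
  have "((\<lambda>v. sc s (fac sc a b (P j) v)) \<circ> ((\<lambda>v. sc s' (fac sc a' b' (P j) v)) \<circ> id)) v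
     = sc (s * s') (fac sc (a*a' + b*b') (a*b' + b*a' + b*b'*cc j) (P j) v)"
    by (simp add: fac_scale[OF j] dih.sq2[OF D] mult.commute)
  also have "\<dots> = v" unfolding fac_def using h1 h2 by (simp add: V.scale_right_distrib)
  finally show "((\<lambda>v. sc s (fac sc a b (P j) v)) \<circ> ((\<lambda>v. sc s' (fac sc a' b' (P j) v)) \<circ> id)) v = id v" by simp
qed

lemma sq_gen: "gen n (Cw [j,j]) (Cw [])"
proof -
  have qh0: "qh \<noteq> 0" using qh q by auto
  consider "j = 0" | "0 < j \<and> j < n" | "j = n" | "j > n" by linarith
  then show ?thesis
  proof cases
    case 1
    define g where "g = (\<lambda>t::nat\<Rightarrow>complex. (t 1 - k0*u0*qh) * (t 1 + k0*inverse u0*qh) * (qh - k0*u0*t 1) * (qh + k0*inverse u0*t 1))"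
    have pg: "polyfun n g" unfolding g_def
      by (intro polyfun_mult polyfun_minus polyfun_add polyfun_const polyfun_var) (use n2 in auto)
    have "good n g"
    proof (rule good_witness[OF pg, of "{k0*u0*qh, -(k0*inverse u0*qh), qh/(k0*u0), -(qh/(k0*inverse u0))}"])
      fix z :: complex assume z: "z \<notin> {k0*u0*qh, -(k0*inverse u0*qh), qh/(k0*u0), -(qh/(k0*inverse u0))}" "z \<noteq> 0"
      have "qh - k0*u0*z \<noteq> 0" using z k0 u0 by (auto simp: field_simps)
      moreover have "qh + k0*inverse u0*z \<noteq> 0" using z k0 u0 by (auto simp: field_simps eq_neg_iff_add_eq_0 add.commute)
      ultimately show "g (\<lambda>i. if i = 1 then z else 1) \<noteq> 0" using z unfolding g_def by (auto simp: eq_neg_iff_add_eq_0 add.commute)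
    qed simp
    moreover have "Cw [j,j] t = Cw [] t" if t: "torus n t" and gt: "g t \<noteq> 0" for t
    proof -
      have t1: "t 1 \<noteq> 0" using t n2 unfolding torus_def by auto
      define x where "x = qh / t 1"
      have x0: "x \<noteq> 0" using qh0 t1 by (simp add: x_def)
      have qq: "q = qh * qh" using qh by (simp add: power2_eq_square)
      have ix: "qh / (q / t 1) = 1 / x" using qh0 t1 unfolding qq by (simp add: x_def field_simps)
      have f: "t 1 - k0*u0*qh \<noteq> 0" "t 1 + k0*inverse u0*qh \<noteq> 0" "qh - k0*u0*t 1 \<noteq> 0" "qh + k0*inverse u0*t 1 \<noteq> 0"
        using gt unfolding g_def by auto
      have d1: "inverse k0 * (1 - k0*u0*x) * (1 + k0*inverse u0*x) \<noteq> 0"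
      proof -
        have "1 - k0*u0*x = (t 1 - k0*u0*qh) / t 1" "1 + k0*inverse u0*x = (t 1 + k0*inverse u0*qh) / t 1"
          using t1 by (auto simp: x_def field_simps)
        then show ?thesis using f k0 t1 by simp
      qed
      have d2: "inverse k0 * (1 - k0*u0*(1/x)) * (1 + k0*inverse u0*(1/x)) \<noteq> 0"
      proof -
        have "1 - k0*u0*(1/x) = (qh - k0*u0*t 1) / qh" "1 + k0*inverse u0*(1/x) = (qh + k0*inverse u0*t 1) / qh"
          using t1 qh0 by (auto simp: x_def field_simps)
        then show ?thesis using f k0 qh0 by simp
      qed
      have cc0: "cc 0 = k0 - inverse k0" by (simp add: cc_def kap_def)
      have "Cw [j,j] t = (\<lambda>v. sc (sK0 x) (fac sc ((inverse u0 - u0) * x - cc 0) (1 - x^2) (P 0) v)) \<circ>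
          ((\<lambda>v. sc (sK0 (1/x)) (fac sc ((inverse u0 - u0) * (1/x) - cc 0) (1 - (1/x)^2) (P 0) v)) \<circ> id)"
      proof -
        have c1: "Cj 0 t = K0V sc n k0 k kn P u0 x" unfolding Cj_def x_def by simp
        have c2: "Cj 0 (sact n q 0 t) = K0V sc n k0 k kn P u0 (1/x)"
          unfolding Cj_def sact_def by (simp only: simp_thms if_True fun_upd_same ix)
        show ?thesis unfolding 1 by (simp only: Cw.simps c1 c2 K0V_nf)
      qed
      also have "\<dots> = id"
        by (rule sq_core) (use K_sq_id[OF k0 u0 x0 d1 d2] in \<open>simp_all add: sK0_def cc0\<close>)
      finally show ?thesis by simp
    qed
    ultimately show ?thesis unfolding gen_def by blast
  next
    case 2
    define g where "g = (\<lambda>t::nat\<Rightarrow>complex. (t (Suc j) - k^2 * t j) * (t j - k^2 * t (Suc j)))"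
    have pg: "polyfun n g" unfolding g_def
      by (intro polyfun_mult polyfun_minus polyfun_add polyfun_const polyfun_var) (use 2 in auto)
    have "good n g"
    proof (rule good_witness[OF pg, of "{k^2, inverse (k^2)}" "Suc j"])
      fix z :: complex assume z: "z \<notin> {k^2, inverse (k^2)}" "z \<noteq> 0"
      have "1 - k^2 * z \<noteq> 0" using z kk by (auto simp: field_simps)
      then show "g (\<lambda>i. if i = Suc j then z else 1) \<noteq> 0" using z unfolding g_def by (auto simp: eq_neg_iff_add_eq_0 add.commute)
    qed simp
    moreover have "Cw [j,j] t = Cw [] t" if t: "torus n t" and gt: "g t \<noteq> 0" for t
    proof -
      have tj: "t j \<noteq> 0" "t (Suc j) \<noteq> 0" using t 2 unfolding torus_def by auto
      define x where "x = t j / t (Suc j)"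
      have x0: "x \<noteq> 0" using tj by (simp add: x_def)
      have ix: "t (Suc j) / t j = 1 / x" using tj by (simp add: x_def)
      have f: "t (Suc j) - k^2 * t j \<noteq> 0" "t j - k^2 * t (Suc j) \<noteq> 0" using gt unfolding g_def by auto
      have d1: "inverse k * (1 - k^2*x) \<noteq> 0"
      proof -
        have "1 - k^2*x = (t (Suc j) - k^2 * t j) / t (Suc j)" using tj by (auto simp: x_def field_simps)
        then show ?thesis using f kk tj by simp
      qed
      have d2: "inverse k * (1 - k^2*(1/x)) \<noteq> 0"
      proof -
        have "1 - k^2*(1/x) = (t j - k^2 * t (Suc j)) / t j" using tj by (auto simp: x_def field_simps)
        then show ?thesis using f kk tj by simp
      qed
      have ccj: "cc j = k - inverse k" using 2 by (simp add: cc_def kap_def)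
      have "Cw [j,j] t = (\<lambda>v. sc (sR x) (fac sc (- cc j) (1 - x) (P j) v)) \<circ>
          ((\<lambda>v. sc (sR (1/x)) (fac sc (- cc j) (1 - 1/x) (P j) v)) \<circ> id)"
      proof -
        have c1: "Cj j t = RV sc n k0 k kn P j x" unfolding Cj_def x_def using 2 by simp
        have c2: "Cj j (sact n q j t) = RV sc n k0 k kn P j (1/x)"
          unfolding Cj_def sact_def using 2 by (simp add: ix)
        show ?thesis by (simp only: Cw.simps c1 c2 RV_nf)
      qed
      also have "\<dots> = id"
        by (rule sq_core) (use 2 R_sq_id[OF kk x0 d1 d2] in \<open>simp_all add: sR_def ccj\<close>)
      finally show ?thesis by simp
    qed
    ultimately show ?thesis unfolding gen_def by blast
  next
    case 3
    define g where "g = (\<lambda>t::nat\<Rightarrow>complex. (1 - kn*un*t n) * (1 + kn*inverse un*t n) * (t n - kn*un) * (t n + kn*inverse un))"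
    have pg: "polyfun n g" unfolding g_def
      by (intro polyfun_mult polyfun_minus polyfun_add polyfun_const polyfun_var) (use n2 in auto)
    have "good n g"
    proof (rule good_witness[OF pg, of "{inverse (kn*un), -inverse (kn*inverse un), kn*un, -(kn*inverse un)}" n])
      fix z :: complex assume z: "z \<notin> {inverse (kn*un), -inverse (kn*inverse un), kn*un, -(kn*inverse un)}" "z \<noteq> 0"
      have "1 - kn*un*z \<noteq> 0" using z kn un by (auto simp: field_simps eq_neg_iff_add_eq_0 add.commute)
      moreover have "1 + kn*inverse un*z \<noteq> 0" using z kn un by (auto simp: field_simps eq_neg_iff_add_eq_0 add.commute)
      ultimately show "g (\<lambda>i. if i = n then z else 1) \<noteq> 0" using z unfolding g_def by (auto simp: eq_neg_iff_add_eq_0 add.commute)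
    qed simp
    moreover have "Cw [j,j] t = Cw [] t" if t: "torus n t" and gt: "g t \<noteq> 0" for t
    proof -
      have tn: "t n \<noteq> 0" using t n2 unfolding torus_def by auto
      define x where "x = t n"
      have x0: "x \<noteq> 0" using tn by (simp add: x_def)
      have ix: "inverse (t n) = 1 / x" by (simp add: x_def inverse_eq_divide)
      have f: "1 - kn*un*x \<noteq> 0" "1 + kn*inverse un*x \<noteq> 0" "x - kn*un \<noteq> 0" "x + kn*inverse un \<noteq> 0"
        using gt unfolding g_def x_def by auto
      have d1: "inverse kn * (1 - kn*un*x) * (1 + kn*inverse un*x) \<noteq> 0" using f kn by simp
      have d2: "inverse kn * (1 - kn*un*(1/x)) * (1 + kn*inverse un*(1/x)) \<noteq> 0"
      proof -
        have "1 - kn*un*(1/x) = (x - kn*un) / x" "1 + kn*inverse un*(1/x) = (x + kn*inverse un) / x"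
          using x0 by (auto simp: field_simps)
        then show ?thesis using f kn x0 by simp
      qed
      have ccn: "cc n = kn - inverse kn" using n2 by (simp add: cc_def kap_def)
      have "Cw [j,j] t = (\<lambda>v. sc (sKn x) (fac sc ((inverse un - un) * x - cc n) (1 - x^2) (P n) v)) \<circ>
          ((\<lambda>v. sc (sKn (1/x)) (fac sc ((inverse un - un) * (1/x) - cc n) (1 - (1/x)^2) (P n) v)) \<circ> id)"
      proof -
        have c1: "Cj n t = KnV sc n k0 k kn P un x" unfolding Cj_def x_def using n2 by simp
        have c2: "Cj n (sact n q n t) = KnV sc n k0 k kn P un (1/x)"
          unfolding Cj_def sact_def using n2 by (simp add: ix)
        show ?thesis unfolding 3 by (simp only: Cw.simps c1 c2 KnV_nf)
      qed
      also have "\<dots> = id"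
        by (rule sq_core) (use 3 K_sq_id[OF kn un x0 d1 d2] in \<open>simp_all add: sKn_def ccn\<close>)
      finally show ?thesis by simp
    qed
    ultimately show ?thesis unfolding gen_def by blast
  next
    case 4
    then show ?thesis by (intro gen_refl_exact) (simp add: Cj_def sact_def)
  qed
qed

lemma cox_gen: "cox_eq n x y \<Longrightarrow> gen n (Cw x) (Cw y)"
proof (induction rule: cox_eq.induct)
  case (refl w) then show ?case by (rule gen_refl_exact) simp
next
  case (sym u w) show ?case using sym.IH by (rule gen_sym)
next
  case (trans u v w) show ?case using trans.IH by (rule gen_trans)
next
  case (ctx x y u v)
  define W where "W = wact n q (rev u)"
  have wx: "wact n q (rev x) = wact n q (rev y)" by (rule wact_cox[OF ctx.hyps])
  have e: "Cw (u @ z @ v) t = Cw u t \<circ> (Cw z (W t) \<circ> Cw v (wact n q (rev z) (W t)))" for z t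
    unfolding W_def by (simp add: Cw_append wact_def)
  have g1: "gen n (\<lambda>t. Cw x (W t)) (\<lambda>t. Cw y (W t))"
    unfolding W_def wact_def by (rule gen_foldr[OF q _ ctx.IH]) (use n2 in simp)
  have g2: "gen n (\<lambda>t. Cw x (W t) \<circ> Cw v (wact n q (rev x) (W t))) (\<lambda>t. Cw y (W t) \<circ> Cw v (wact n q (rev y) (W t)))"
    unfolding wx by (rule gen_comp[OF g1 gen_refl_exact]) simp
  have "gen n (\<lambda>t. Cw u t \<circ> (Cw x (W t) \<circ> Cw v (wact n q (rev x) (W t))))
     (\<lambda>t. Cw u t \<circ> (Cw y (W t) \<circ> Cw v (wact n q (rev y) (W t))))"
    by (rule gen_comp[OF gen_refl_exact g2]) simp
  then show ?case unfolding e .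
next
  case (sq j) show ?case by (rule sq_gen)
next
  case braid0 show ?case by (rule gen_refl_exact) (erule Cw_braid0)
next
  case braidn show ?case by (rule gen_refl_exact) (erule Cw_braidn)
next
  case (braidi i) show ?case by (rule gen_refl_exact) (rule Cw_braidi[OF _ braidi])
next
  case (comm j i) show ?case by (rule gen_refl_exact) (rule comm_exact[OF comm])
qed

end

context hk begin

interpretation V: vector_space sc by (rule vs)

lemma ratE_id: "ratE sc n (\<lambda>t. id)"
  unfolding ratE_def
proof (intro exI conjI allI impI)
  show "good n (\<lambda>t. 1)" by (rule good_const) (use torus_ones in auto)
  fix k :: nat assume "k < 1"
  show "polyfun n (\<lambda>t. 1)" by (rule polyfun_const)
  show "Vector_Spaces.linear sc sc (\<lambda>v. v)" by (rule lin_id[OF vs])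
next
  fix t show "id = (\<lambda>v. \<Sum>k<(1::nat). sc (1 / 1) v)" by (simp add: fun_eq_iff)
qed

lemma ratE_two:
  assumes g: "good n g" and f0: "polyfun n f0" and f1: "polyfun n f1" and j: "j \<le> n"
    and F: "\<And>t. torus n t \<Longrightarrow> g t \<noteq> 0 \<Longrightarrow> F t = (\<lambda>v. sc (f0 t / g t) v + sc (f1 t / g t) (P j v))"
  shows "ratE sc n F"
  unfolding ratE_def
proof (intro exI conjI allI impI)
  show "good n g" by (rule g)
  fix kk :: nat assume "kk < 2"
  show "polyfun n ((\<lambda>kk. if kk = 0 then f0 else f1) kk)" using f0 f1 by simp
  show "Vector_Spaces.linear sc sc ((\<lambda>kk. if kk = 0 then (\<lambda>v. v) else P j) kk)" using lin_id[OF vs] linP[OF j] by simp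
next
  fix t assume "torus n t \<and> g t \<noteq> 0"
  then show "F t = (\<lambda>v. \<Sum>kk<(2::nat). sc ((\<lambda>kk. if kk = 0 then f0 else f1) kk t / g t) ((\<lambda>kk. if kk = 0 then (\<lambda>v. v) else P j) kk v))"
    using F by (simp add: numeral_2_eq_2)
qed

lemma sf_expand: "(\<lambda>v. sc s (fac sc a b Q v)) = (\<lambda>v. sc (s * a) v + sc (s * b) (Q v))"
  unfolding fac_def by (simp add: V.scale_right_distrib)

lemma ratE_Cj: "ratE sc n (Cj j)"
proof -
  have qh0: "qh \<noteq> 0" using qh q by auto
  consider "j = 0" | "0 < j \<and> j < n" | "j = n" | "j > n" by linarith
  then show ?thesis
  proof cases
    case 1
    define g where "g = (\<lambda>t::nat\<Rightarrow>complex. inverse k0 * (t 1 - k0*u0*qh) * (t 1 + k0*inverse u0*qh))"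
    define f0 where "f0 = (\<lambda>t::nat\<Rightarrow>complex. (inverse u0 - u0) * qh * t 1 - cc 0 * t 1 ^ 2)"
    define f1 where "f1 = (\<lambda>t::nat\<Rightarrow>complex. t 1 ^ 2 - q)"
    have pg: "polyfun n g" unfolding g_def
      by (intro polyfun_mult polyfun_minus polyfun_add polyfun_const polyfun_var) (use n2 in auto)
    have "good n g"
    proof (rule good_witness[OF pg, of "{k0*u0*qh, -(k0*inverse u0*qh)}" 1])
      fix z :: complex assume z: "z \<notin> {k0*u0*qh, -(k0*inverse u0*qh)}" "z \<noteq> 0"
      then show "g (\<lambda>i. if i = 1 then z else 1) \<noteq> 0" using k0 unfolding g_def by (auto simp: eq_neg_iff_add_eq_0 add.commute)
    qed simp
    moreover have "polyfun n f0" unfolding f0_def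
      by (intro polyfun_mult polyfun_minus polyfun_power polyfun_const polyfun_var) (use n2 in auto)
    moreover have "polyfun n f1" unfolding f1_def
      by (intro polyfun_minus polyfun_power polyfun_const polyfun_var) (use n2 in auto)
    moreover have "Cj 0 t = (\<lambda>v. sc (f0 t / g t) v + sc (f1 t / g t) (P 0 v))" if t: "torus n t" and gt: "g t \<noteq> 0" for t
    proof -
      have t1: "t 1 \<noteq> 0" using t n2 unfolding torus_def by auto
      have qq: "q = qh * qh" using qh by (simp add: power2_eq_square)
      define x where "x = qh / t 1"
      have D: "inverse k0 * (1 - k0*u0*x) * (1 + k0*inverse u0*x) = g t / t 1 ^ 2"
        unfolding g_def x_def using t1 k0 u0 by (simp add: field_simps power2_eq_square)
      have s: "sK0 x = t 1 ^ 2 / g t" unfolding sK0_def D by simp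
      have "Cj 0 t = (\<lambda>v. sc (sK0 x * ((inverse u0 - u0) * x - cc 0)) v + sc (sK0 x * (1 - x^2)) (P 0 v))"
        unfolding Cj_def x_def by (simp add: K0V_nf sf_expand)
      also have "sK0 x * ((inverse u0 - u0) * x - cc 0) = f0 t / g t"
        unfolding s f0_def using t1 gt by (simp add: x_def field_simps power2_eq_square)
      also have "sK0 x * (1 - x^2) = f1 t / g t"
        unfolding s f1_def using t1 gt by (simp add: x_def qq field_simps power2_eq_square)
      finally show ?thesis .
    qed
    ultimately show ?thesis using 1 by (intro ratE_two[of g f0 f1 0]) auto
  next
    case 2
    define g where "g = (\<lambda>t::nat\<Rightarrow>complex. inverse k * (t (Suc j) - k^2 * t j))"
    define f0 where "f0 = (\<lambda>t::nat\<Rightarrow>complex. - cc j * t (Suc j))"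
    define f1 where "f1 = (\<lambda>t::nat\<Rightarrow>complex. t (Suc j) - t j)"
    have pg: "polyfun n g" unfolding g_def
      by (intro polyfun_mult polyfun_minus polyfun_const polyfun_var) (use 2 in auto)
    have "good n g"
    proof (rule good_witness[OF pg, of "{k^2}" "Suc j"])
      fix z :: complex assume z: "z \<notin> {k^2}" "z \<noteq> 0"
      then show "g (\<lambda>i. if i = Suc j then z else 1) \<noteq> 0" using kk unfolding g_def by auto
    qed simp
    moreover have "polyfun n f0" unfolding f0_def
      by (intro polyfun_mult polyfun_const polyfun_var) (use 2 in auto)
    moreover have "polyfun n f1" unfolding f1_def
      by (intro polyfun_minus polyfun_var) (use 2 in auto)
    moreover have "Cj j t = (\<lambda>v. sc (f0 t / g t) v + sc (f1 t / g t) (P j v))" if t: "torus n t" and gt: "g t \<noteq> 0" for t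
    proof -
      have tj: "t j \<noteq> 0" "t (Suc j) \<noteq> 0" using t 2 unfolding torus_def by auto
      define x where "x = t j / t (Suc j)"
      have D: "inverse k * (1 - k^2 * x) = g t / t (Suc j)"
        unfolding g_def x_def using tj by (simp add: field_simps)
      have s: "sR x = t (Suc j) / g t" unfolding sR_def D by simp
      have "Cj j t = (\<lambda>v. sc (sR x * (- cc j)) v + sc (sR x * (1 - x)) (P j v))"
        unfolding Cj_def x_def using 2 by (simp add: RV_nf sf_expand)
      also have "sR x * (- cc j) = f0 t / g t"
        unfolding s f0_def by (simp add: field_simps)
      also have "sR x * (1 - x) = f1 t / g t"
        unfolding s f1_def using tj gt by (simp add: x_def field_simps)
      finally show ?thesis .
    qed
    ultimately show ?thesis using 2 by (intro ratE_two[of g f0 f1 j]) auto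
  next
    case 3
    define g where "g = (\<lambda>t::nat\<Rightarrow>complex. inverse kn * (1 - kn*un*t n) * (1 + kn*inverse un*t n))"
    define f0 where "f0 = (\<lambda>t::nat\<Rightarrow>complex. (inverse un - un) * t n - cc n)"
    define f1 where "f1 = (\<lambda>t::nat\<Rightarrow>complex. 1 - t n ^ 2)"
    have pg: "polyfun n g" unfolding g_def
      by (intro polyfun_mult polyfun_minus polyfun_add polyfun_const polyfun_var) (use n2 in auto)
    have "good n g"
    proof (rule good_witness[OF pg, of "{inverse (kn*un), -inverse (kn*inverse un)}" n])
      fix z :: complex assume z: "z \<notin> {inverse (kn*un), -inverse (kn*inverse un)}" "z \<noteq> 0"
      have "1 - kn*un*z \<noteq> 0" using z kn un by (auto simp: field_simps)
      moreover have "1 + kn*inverse un*z \<noteq> 0" using z kn un by (auto simp: field_simps eq_neg_iff_add_eq_0 add.commute)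
      ultimately show "g (\<lambda>i. if i = n then z else 1) \<noteq> 0" using kn unfolding g_def by auto
    qed simp
    moreover have "polyfun n f0" unfolding f0_def
      by (intro polyfun_mult polyfun_minus polyfun_const polyfun_var) (use n2 in auto)
    moreover have "polyfun n f1" unfolding f1_def
      by (intro polyfun_minus polyfun_power polyfun_const polyfun_var) (use n2 in auto)
    moreover have "Cj n t = (\<lambda>v. sc (f0 t / g t) v + sc (f1 t / g t) (P n v))" if t: "torus n t" and gt: "g t \<noteq> 0" for t
    proof -
      have s: "sKn (t n) = 1 / g t" unfolding sKn_def g_def by (simp add: inverse_eq_divide)
      have "Cj n t = (\<lambda>v. sc (sKn (t n) * ((inverse un - un) * t n - cc n)) v + sc (sKn (t n) * (1 - (t n)^2)) (P n v))"
        unfolding Cj_def using n2 by (simp add: KnV_nf sf_expand)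
      also have "sKn (t n) * ((inverse un - un) * t n - cc n) = f0 t / g t"
        unfolding s f0_def by simp
      also have "sKn (t n) * (1 - (t n)^2) = f1 t / g t"
        unfolding s f1_def by simp
      finally show ?thesis .
    qed
    ultimately show ?thesis using 3 by (intro ratE_two[of g f0 f1 n]) auto
  next
    case 4
    have "Cj j = (\<lambda>t. id)" using 4 by (simp add: Cj_def fun_eq_iff)
    then show ?thesis using ratE_id by simp
  qed
qed

lemma ratE_Cw: "ratE sc n (Cw w)"
proof (induction w)
  case Nil
  have "Cw [] = (\<lambda>t. id)" by (rule ext) simp
  show ?case unfolding \<open>Cw [] = (\<lambda>t. id)\<close> by (rule ratE_id)
next
  case (Cons j w)
  have "ratE sc n (\<lambda>t. Cw w (sact n q j t))" by (rule ratE_sact[OF Cons q]) (use n2 in simp)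
  have e: "Cw (j # w) = (\<lambda>t. Cj j t \<circ> Cw w (sact n q j t))" by (rule ext) simp
  show ?case unfolding e by (rule ratE_comp[OF vs ratE_Cj[of j] \<open>ratE sc n (\<lambda>t. Cw w (sact n q j t))\<close>])
qed

lemma family: "is_C_family sc n k0 k kn P q qh u0 un Cw"
  unfolding is_C_family_def
proof (intro conjI allI impI)
  fix w show "rat_end sc n (Cw w)" by (rule ratE_rat_end[OF ratE_Cw])
next
  fix w w' assume "valid_word n w \<and> valid_word n w' \<and> cox_eq n w w'"
  then show "generic_eq n (Cw w) (Cw w')" using cox_gen gen_generic_eq by blast
next
  show "generic_eq n (Cw []) (\<lambda>t. id)" unfolding gen_generic_eq[symmetric] by (rule gen_refl_exact) simp
next
  fix w w' show "generic_eq n (Cw (w @ w')) (\<lambda>t. Cw w t \<circ> Cw w' (wact n q (rev w) t))"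
    unfolding gen_generic_eq[symmetric] by (rule gen_refl_exact) (simp add: Cw_append)
next
  show "generic_eq n (Cw [0]) (\<lambda>t. K0V sc n k0 k kn P u0 (qh / t 1))"
    unfolding gen_generic_eq[symmetric] by (rule gen_refl_exact) (simp add: Cj_def)
next
  fix i assume "1 \<le> i \<and> i < n"
  then show "generic_eq n (Cw [i]) (\<lambda>t. RV sc n k0 k kn P i (t i / t (Suc i)))"
    unfolding gen_generic_eq[symmetric] by (intro gen_refl_exact) (simp add: Cj_def)
next
  show "generic_eq n (Cw [n]) (\<lambda>t. KnV sc n k0 k kn P un (t n))"
    unfolding gen_generic_eq[symmetric] using n2 by (intro gen_refl_exact) (simp add: Cj_def)
qed

lemma unique: assumes C': "is_C_family sc n k0 k kn P q qh u0 un C'"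
  shows "valid_word n w \<Longrightarrow> generic_eq n (Cw w) (C' w)"
proof (induction w)
  case Nil
  have "gen n (C' []) (\<lambda>t. id)" using C' unfolding is_C_family_def gen_generic_eq by blast
  moreover have "gen n (Cw []) (\<lambda>t. id)" by (rule gen_refl_exact) simp
  ultimately show ?case unfolding gen_generic_eq[symmetric] by (meson gen_sym gen_trans)
next
  case (Cons j w)
  have j: "j \<le> n" and vw: "valid_word n w" and vj: "valid_word n [j]" using Cons.prems by (auto simp: valid_word_def)
  have a: "gen n (C' ([j] @ w)) (\<lambda>t. C' [j] t \<circ> C' w (wact n q (rev [j]) t))"
    using C' vw vj unfolding is_C_family_def gen_generic_eq by blast
  have b: "gen n (C' [j]) (Cj j)"
  proof -
    consider "j = 0" | "1 \<le> j \<and> j < n" | "j = n" using j by linarith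
    then show ?thesis
    proof cases
      case 1 then show ?thesis using C' unfolding is_C_family_def gen_generic_eq[symmetric] Cj_def
        by (simp add: fun_eq_iff)
    next
      case 2 then show ?thesis using C' unfolding is_C_family_def gen_generic_eq[symmetric] Cj_def by auto
    next
      case 3 then show ?thesis using C' n2 unfolding is_C_family_def gen_generic_eq[symmetric] Cj_def by auto
    qed
  qed
  have c: "gen n (\<lambda>t. C' w (sact n q j t)) (\<lambda>t. Cw w (sact n q j t))"
    using Cons.IH[OF vw] gen_sym gen_sact[OF _ q] n2 unfolding gen_generic_eq[symmetric] by force
  have "gen n (\<lambda>t. C' [j] t \<circ> C' w (sact n q j t)) (\<lambda>t. Cj j t \<circ> Cw w (sact n q j t))"
    by (rule gen_comp[OF b c])
  moreover have "Cw (j # w) = (\<lambda>t. Cj j t \<circ> Cw w (sact n q j t))" by (rule ext) simp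
  ultimately have "gen n (C' (j # w)) (Cw (j # w))" using a by (simp add: wact_def) (metis gen_trans)
  then show ?case unfolding gen_generic_eq[symmetric] by (rule gen_sym)
qed

end

theorem mainTheorem8:
  fixes sc :: "complex \<Rightarrow> 'v::ab_group_add \<Rightarrow> 'v"
    and n :: nat and k0 k kn q qh u0 un :: complex
    and P :: "nat \<Rightarrow> 'v \<Rightarrow> 'v"
  assumes "vector_space sc"
    and "n \<ge> 2"
    and "k0 \<noteq> 0" and "k \<noteq> 0" and "kn \<noteq> 0"
    and "q \<noteq> 0" and "qh ^ 2 = q"
    and "u0 \<noteq> 0" and "un \<noteq> 0"
    and "is_rep sc n k0 k kn P"
  shows "\<exists>C. is_C_family sc n k0 k kn P q qh u0 un C \<and>
           (\<forall>C'. is_C_family sc n k0 k kn P q qh u0 un C' \<longrightarrow>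
                  (\<forall>w. valid_word n w \<longrightarrow> generic_eq n (C w) (C' w)))"
proof -
  interpret H: hk sc n k0 k kn q qh u0 un P by (rule hk.intro) (use assms in auto)
  show ?thesis using H.family H.unique by blast
qed

end
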